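(* Suppose $d\ge2$, $D\ge101$ and $T\ge45(d-1)^2D$. Then for any algorithm $\mathfrak A$ there exists an MDP $M_\theta$ of the family below (with $\delta=1/D$) such that $L_\theta\le100/99$, $L_\varphi\le1+\log(D-1)$, and $\mathbb E[\mathrm{Regret}(M_\theta,\mathfrak A,x_0,T)]\ge\frac1{2025}d\sqrt{DT}$, where the expectation is over the randomness of $M_\theta$ and $\mathfrak A$.
   Context: Family $M_\theta$: two states $x_0,x_1$; actions $\mathcal A=\{-1,1\}^{d-1}$; rewards $r(x_0,a)=0$, $r(x_1,a)=1$. Parameters: $\delta=1/D$, $\Delta=(d-1)/(45\sqrt{(2/5)(T/\delta)\log2})$, $\bar\Delta=\log\frac{(1-\delta)(\delta+\Delta)}{\delta(1-\delta-\Delta)}$, $\alpha=\sqrt{\bar\Delta/((d-1)(1+\bar\Delta))}$, $\beta=\sqrt{1/(1+\bar\Delta)}$. Features: $\varphi(x_0,a,x_0)=(-\alpha a,\beta\log(\delta^{-1}-1))$, $\varphi(x_0,a,x_1)=\varphi(x_1,a,x_0)=(0,0)$, $\varphi(x_1,a,x_1)=(0,\beta\log(\delta^{-1}-1))$ in $\mathbb R^{d-1}\times\mathbb R$. For $\theta\in\{-\bar\Delta/(d-1),\bar\Delta/(d-1)\}^{d-1}$ the transition core is $\bar\theta=(\theta/\alpha,1/\beta)$ and $p(x_j\mid x_i,a)=\exp(\varphi(x_i,a,x_j)^\top\bar\theta)/\sum_{j'\in\{0,1\}}\exp(\varphi(x_i,a,x_{j'})^\top\bar\theta)$; thus $p(x_1\mid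 x_0,a)=1/(1+(\delta^{-1}-1)e^{-a^\top\theta})$ and $p(x_0\mid x_1,a)=\delta$. $L_\theta=\|\bar\theta\|_2$, $L_\varphi=\max\|\varphi\|_2$. With $s_1=x_0$ and $J^*(M_\theta)$ the optimal average reward, $\mathrm{Regret}(M_\theta,\mathfrak A,x_0,T)=TJ^*(M_\theta)-\sum_{t=1}^Tr(s_t,a_t)$. *)

theory Defs
  imports "HOL-Probability.Probability"
begin

text \<open>States: x0 is encoded as 0, x1 as 1. Actions: lists of length d-1 with entries in {-1,1}.
  Vectors of R^(d-1) x R are lists of length d (last entry = the extra coordinate).\<close>

type_synonym action = "real list"
type_synonym hist = "(nat \<times> action) list"
type_synonym algorithm = "hist \<Rightarrow> nat \<Rightarrow> action pmf"

definition actions :: "nat \<Rightarrow> action set" where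
  "actions d = {a. length a = d - 1 \<and> set a \<subseteq> {-1, 1}}"

definition states :: "nat set" where "states = {0, 1}"

definition reward :: "nat \<Rightarrow> action \<Rightarrow> real" where
  "reward s a = (if s = 1 then 1 else 0)"

definition ip :: "real list \<Rightarrow> real list \<Rightarrow> real" where
  "ip u v = sum_list (map2 (*) u v)"

definition vnorm :: "real list \<Rightarrow> real" where
  "vnorm v = sqrt (sum_list (map (\<lambda>x. x ^ 2) v))"

definition delta :: "real \<Rightarrow> real" where "delta D = 1 / D"

definition Delta :: "nat \<Rightarrow> real \<Rightarrow> nat \<Rightarrow> real" where
  "Delta d D T = real (d - 1) / (45 * sqrt ((2/5) * (real T / delta D) * ln 2))"

definition Deltabar :: "nat \<Rightarrow> real \<Rightarrow> nat \<Rightarrow> real" where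
  "Deltabar d D T = ln (((1 - delta D) * (delta D + Delta d D T)) /
                        (delta D * (1 - delta D - Delta d D T)))"

definition alpha :: "nat \<Rightarrow> real \<Rightarrow> nat \<Rightarrow> real" where
  "alpha d D T = sqrt (Deltabar d D T / (real (d - 1) * (1 + Deltabar d D T)))"

definition beta :: "nat \<Rightarrow> real \<Rightarrow> nat \<Rightarrow> real" where
  "beta d D T = sqrt (1 / (1 + Deltabar d D T))"

definition phi :: "nat \<Rightarrow> real \<Rightarrow> nat \<Rightarrow> nat \<Rightarrow> action \<Rightarrow> nat \<Rightarrow> real list" where
  "phi d D T s a s' =
     (if s = 0 \<and> s' = 0 then map (\<lambda>x. - alpha d D T * x) a @ [beta d D T * ln (1 / delta D - 1)]
      else if s = 1 \<and> s' = 1 then replicate (d - 1) 0 @ [beta d D T * ln (1 / delta D - 1)]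
      else replicate (d - 1) 0 @ [0])"

definition Thetas :: "nat \<Rightarrow> real \<Rightarrow> nat \<Rightarrow> real list set" where
  "Thetas d D T = {\<theta>. length \<theta> = d - 1 \<and>
      set \<theta> \<subseteq> {- Deltabar d D T / real (d - 1), Deltabar d D T / real (d - 1)}}"

definition thetabar :: "nat \<Rightarrow> real \<Rightarrow> nat \<Rightarrow> real list \<Rightarrow> real list" where
  "thetabar d D T \<theta> = map (\<lambda>x. x / alpha d D T) \<theta> @ [1 / beta d D T]"

definition L_theta :: "nat \<Rightarrow> real \<Rightarrow> nat \<Rightarrow> real list \<Rightarrow> real" where
  "L_theta d D T \<theta> = vnorm (thetabar d D T \<theta>)"

definition L_phi :: "nat \<Rightarrow> real \<Rightarrow> nat \<Rightarrow> real" where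
  "L_phi d D T = Max {vnorm (phi d D T s a s') | s a s'.
                        s \<in> states \<and> a \<in> actions d \<and> s' \<in> states}"

definition p1 :: "nat \<Rightarrow> real \<Rightarrow> nat \<Rightarrow> real list \<Rightarrow> nat \<Rightarrow> action \<Rightarrow> real" where
  "p1 d D T \<theta> s a =
     exp (ip (phi d D T s a 1) (thetabar d D T \<theta>)) /
     (exp (ip (phi d D T s a 0) (thetabar d D T \<theta>)) + exp (ip (phi d D T s a 1) (thetabar d D T \<theta>)))"

definition trans :: "nat \<Rightarrow> real \<Rightarrow> nat \<Rightarrow> real list \<Rightarrow> nat \<Rightarrow> action \<Rightarrow> nat pmf" where
  "trans d D T \<theta> s a = map_pmf (\<lambda>b. if b then 1 else 0) (bernoulli_pmf (p1 d D T \<theta> s a))"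

text \<open>Distribution of (history of (s_t,a_t) for t=1..n, s_{n+1}) when running algorithm A
  in the MDP with transition kernel P, starting at s_1 = x0.\<close>
fun traj :: "(nat \<Rightarrow> action \<Rightarrow> nat pmf) \<Rightarrow> algorithm \<Rightarrow> nat \<Rightarrow> (hist \<times> nat) pmf" where
  "traj P A 0 = return_pmf ([], 0)"
| "traj P A (Suc t) = bind_pmf (traj P A t) (\<lambda>(h, s).
      bind_pmf (A h s) (\<lambda>a. bind_pmf (P s a) (\<lambda>s'. return_pmf (h @ [(s, a)], s'))))"

definition total_reward :: "hist \<Rightarrow> real" where
  "total_reward h = sum_list (map (\<lambda>(s, a). reward s a) h)"

definition expected_total_reward :: "(nat \<Rightarrow> action \<Rightarrow> nat pmf) \<Rightarrow> algorithm \<Rightarrow> nat \<Rightarrow> real" where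
  "expected_total_reward P A n = measure_pmf.expectation (traj P A n) (\<lambda>(h, s). total_reward h)"

definition valid_alg :: "nat \<Rightarrow> algorithm \<Rightarrow> bool" where
  "valid_alg d A \<longleftrightarrow> (\<forall>h s. set_pmf (A h s) \<subseteq> actions d)"

definition Jstar :: "nat \<Rightarrow> (nat \<Rightarrow> action \<Rightarrow> nat pmf) \<Rightarrow> real" where
  "Jstar d P = real_of_ereal (SUP \<pi>\<in>{\<pi>. valid_alg d \<pi>}.
      limsup (\<lambda>n. ereal (expected_total_reward P \<pi> n / real n)))"

definition expected_regret :: "nat \<Rightarrow> (nat \<Rightarrow> action \<Rightarrow> nat pmf) \<Rightarrow> algorithm \<Rightarrow> nat \<Rightarrow> real" where
  "expected_regret d P A T = real T * Jstar d P - expected_total_reward P A T"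

end

theory Submission
  imports Defs
begin

lemma exp_bind:
  fixes h :: "'b \<Rightarrow> real"
  assumes "finite (set_pmf p)" "\<And>x. x \<in> set_pmf p \<Longrightarrow> finite (set_pmf (f x))"
  shows "measure_pmf.expectation (bind_pmf p f) h =
         measure_pmf.expectation p (\<lambda>x. measure_pmf.expectation (f x) h)"
proof -
  have "measure_pmf.expectation (bind_pmf p f) h = (\<Sum>a\<in>set_pmf p. pmf p a *\<^sub>R measure_pmf.expectation (f a) h)"
    by (rule pmf_expectation_bind) (use assms in auto)
  also have "\<dots> = measure_pmf.expectation p (\<lambda>x. measure_pmf.expectation (f x) h)"
    by (subst integral_measure_pmf[of "set_pmf p"]) (use assms in auto)
  finally show ?thesis .
qed

lemma exp_mono:
  fixes f g :: "'a \<Rightarrow> real"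
  assumes "finite (set_pmf M)" "\<And>x. x \<in> set_pmf M \<Longrightarrow> f x \<le> g x"
  shows "measure_pmf.expectation M f \<le> measure_pmf.expectation M g"
  by (rule integral_mono_AE) (use assms in \<open>auto simp: integrable_measure_pmf_finite AE_measure_pmf_iff\<close>)

lemma traj_fin:
  assumes "\<And>h s. finite (set_pmf (A h s))" "\<And>s a. finite (set_pmf (P s a))"
  shows "finite (set_pmf (traj P A n))"
  by (induction n) (auto simp: assms)

lemma exp_traj_Suc:
  fixes F :: "hist \<times> nat \<Rightarrow> real"
  assumes fA: "\<And>h s. finite (set_pmf (A h s))" and fP: "\<And>s a. finite (set_pmf (P s a))"
  shows "measure_pmf.expectation (traj P A (Suc n)) F =
    measure_pmf.expectation (traj P A n) (\<lambda>(h,s). measure_pmf.expectation (A h s)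
       (\<lambda>a. measure_pmf.expectation (P s a) (\<lambda>s'. F (h @ [(s,a)], s'))))"
proof -
  have fT: "finite (set_pmf (traj P A n))" by (rule traj_fin[OF fA fP])
  have "measure_pmf.expectation (traj P A (Suc n)) F =
    measure_pmf.expectation (traj P A n) (\<lambda>x. measure_pmf.expectation (case x of (h, s) \<Rightarrow>
      bind_pmf (A h s) (\<lambda>a. bind_pmf (P s a) (\<lambda>s'. return_pmf (h @ [(s, a)], s')))) F)"
    unfolding traj.simps by (rule exp_bind[OF fT]) (auto simp: fA fP)
  also have "\<dots> = measure_pmf.expectation (traj P A n) (\<lambda>(h,s). measure_pmf.expectation (A h s)
       (\<lambda>a. measure_pmf.expectation (P s a) (\<lambda>s'. F (h @ [(s,a)], s'))))"
  proof (intro Bochner_Integration.integral_cong refl)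
    fix x :: "hist \<times> nat"
    obtain h s where x: "x = (h, s)" by (cases x)
    have "measure_pmf.expectation (bind_pmf (A h s) (\<lambda>a. bind_pmf (P s a) (\<lambda>s'. return_pmf (h @ [(s, a)], s')))) F
      = measure_pmf.expectation (A h s) (\<lambda>a. measure_pmf.expectation (bind_pmf (P s a) (\<lambda>s'. return_pmf (h @ [(s, a)], s'))) F)"
      by (rule exp_bind) (auto simp: fA fP)
    also have "\<dots> = measure_pmf.expectation (A h s) (\<lambda>a. measure_pmf.expectation (P s a) (\<lambda>s'. F (h @ [(s,a)], s')))"
      by (intro Bochner_Integration.integral_cong refl, subst exp_bind) (auto simp: fA fP)
    finally show "measure_pmf.expectation (case x of (h, s) \<Rightarrow>
      bind_pmf (A h s) (\<lambda>a. bind_pmf (P s a) (\<lambda>s'. return_pmf (h @ [(s, a)], s')))) F =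
      (case x of (h,s) \<Rightarrow> measure_pmf.expectation (A h s)
       (\<lambda>a. measure_pmf.expectation (P s a) (\<lambda>s'. F (h @ [(s,a)], s'))))" using x by simp
  qed
  finally show ?thesis .
qed

lemma drift:
  fixes \<Phi> :: "hist \<times> nat \<Rightarrow> real"
  assumes fA: "\<And>h s. finite (set_pmf (A h s))" and fP: "\<And>s a. finite (set_pmf (P s a))"
  and step: "\<And>n h s. (h, s) \<in> set_pmf (traj P A n) \<Longrightarrow>
     measure_pmf.expectation (A h s) (\<lambda>a. measure_pmf.expectation (P s a) (\<lambda>s'. \<Phi> (h @ [(s,a)], s')))
       \<ge> \<Phi> (h, s) + c"
  shows "measure_pmf.expectation (traj P A n) \<Phi> \<ge> \<Phi> ([], 0) + real n * c"
proof (induction n)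
  case 0
  then show ?case by simp
next
  case (Suc n)
  have "\<Phi> ([], 0) + real (Suc n) * c \<le> measure_pmf.expectation (traj P A n) \<Phi> + c"
    using Suc by (simp add: algebra_simps)
  also have "\<dots> = measure_pmf.expectation (traj P A n) (\<lambda>x. \<Phi> x + c)"
    by (simp add: integrable_measure_pmf_finite traj_fin[OF fA fP])
  also have "\<dots> \<le> measure_pmf.expectation (traj P A n) (\<lambda>(h,s). measure_pmf.expectation (A h s)
       (\<lambda>a. measure_pmf.expectation (P s a) (\<lambda>s'. \<Phi> (h @ [(s,a)], s'))))"
    by (rule exp_mono[OF traj_fin[OF fA fP]]) (use step in auto)
  also have "\<dots> = measure_pmf.expectation (traj P A (Suc n)) \<Phi>"
    by (rule exp_traj_Suc[symmetric, OF fA fP])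
  finally show ?case .
qed

lemma traj_support:
  assumes "valid_alg d A" "\<And>s a. set_pmf (P s a) \<subseteq> {0,1}" "(h, s) \<in> set_pmf (traj P A n)"
  shows "length h = n \<and> s \<in> {0,1} \<and> (\<forall>x\<in>set h. fst x \<in> {0,1} \<and> snd x \<in> actions d)"
  using assms(3)
proof (induction n arbitrary: h s)
  case 0
  then show ?case by simp
next
  case (Suc n)
  then show ?case using assms(1,2) unfolding valid_alg_def by (fastforce)
qed

lemma exp_abs:
  fixes f :: "'a \<Rightarrow> real"
  assumes "finite (set_pmf M)"
  shows "\<bar>measure_pmf.expectation M f\<bar> \<le> measure_pmf.expectation M (\<lambda>x. \<bar>f x\<bar>)"
proof -
  have "measure_pmf.expectation M f \<le> measure_pmf.expectation M (\<lambda>x. \<bar>f x\<bar>)"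
    by (rule exp_mono[OF assms]) auto
  moreover have "measure_pmf.expectation M (\<lambda>x. - f x) \<le> measure_pmf.expectation M (\<lambda>x. \<bar>f x\<bar>)"
    by (rule exp_mono[OF assms]) auto
  ultimately show ?thesis by simp
qed

lemma exp_abs_sqrt:
  fixes f :: "'a \<Rightarrow> real"
  assumes fin: "finite (set_pmf M)"
  shows "measure_pmf.expectation M (\<lambda>x. \<bar>f x\<bar>) \<le> sqrt (measure_pmf.expectation M (\<lambda>x. (f x)\<^sup>2))"
proof -
  define m where "m = measure_pmf.expectation M (\<lambda>x. \<bar>f x\<bar>)"
  have m0: "m \<ge> 0" unfolding m_def by (rule Bochner_Integration.integral_nonneg) auto
  have int: "integrable (measure_pmf M) g" for g :: "'a \<Rightarrow> real"
    by (rule integrable_measure_pmf_finite[OF fin])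
  have "0 \<le> measure_pmf.expectation M (\<lambda>x. (\<bar>f x\<bar> - m)\<^sup>2)"
    by (rule Bochner_Integration.integral_nonneg) auto
  also have "(\<lambda>x. (\<bar>f x\<bar> - m)\<^sup>2) = (\<lambda>x. (f x)\<^sup>2 - 2 * m * \<bar>f x\<bar> + m\<^sup>2)"
    by (auto simp: power2_eq_square algebra_simps)
  also have "measure_pmf.expectation M \<dots> = measure_pmf.expectation M (\<lambda>x. (f x)\<^sup>2) - 2 * m * m + m\<^sup>2"
    by (simp add: int m_def prob_space_measure_pmf prob_space.prob_space)
  finally have "m\<^sup>2 \<le> measure_pmf.expectation M (\<lambda>x. (f x)\<^sup>2)" by (simp add: power2_eq_square)
  then have "sqrt (m\<^sup>2) \<le> sqrt (measure_pmf.expectation M (\<lambda>x. (f x)\<^sup>2))" by (rule real_sqrt_le_mono)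
  then show ?thesis using m0 by (simp add: m_def)
qed

lemma tv_bound:
  fixes f L :: "'a \<Rightarrow> real"
  assumes fin: "finite (set_pmf M)" and EL: "measure_pmf.expectation M L = 1"
    and bnd: "\<And>x. x \<in> set_pmf M \<Longrightarrow> \<bar>f x\<bar> \<le> B"
  shows "\<bar>measure_pmf.expectation M (\<lambda>x. f x * L x) - measure_pmf.expectation M f\<bar>
           \<le> B * sqrt (measure_pmf.expectation M (\<lambda>x. (L x)\<^sup>2) - 1)"
proof -
  have int: "integrable (measure_pmf M) g" for g :: "'a \<Rightarrow> real"
    by (rule integrable_measure_pmf_finite[OF fin])
  have "measure_pmf.expectation M (\<lambda>x. f x * L x) - measure_pmf.expectation M f
      = measure_pmf.expectation M (\<lambda>x. f x * (L x - 1))"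
    by (simp add: int algebra_simps)
  also have "\<bar>\<dots>\<bar> \<le> measure_pmf.expectation M (\<lambda>x. \<bar>f x * (L x - 1)\<bar>)"
    by (rule exp_abs[OF fin])
  also have "\<dots> \<le> measure_pmf.expectation M (\<lambda>x. B * \<bar>L x - 1\<bar>)"
    by (rule exp_mono[OF fin]) (auto simp: abs_mult intro!: mult_right_mono bnd)
  also have "\<dots> = B * measure_pmf.expectation M (\<lambda>x. \<bar>L x - 1\<bar>)" by simp
  also have "\<dots> \<le> B * sqrt (measure_pmf.expectation M (\<lambda>x. (L x - 1)\<^sup>2))"
  proof (rule mult_left_mono[OF exp_abs_sqrt[OF fin]])
    obtain x where "x \<in> set_pmf M" using set_pmf_not_empty[of M] by blast
    then show "0 \<le> B" using bnd[of x] by linarith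
  qed
  also have "measure_pmf.expectation M (\<lambda>x. (L x - 1)\<^sup>2) = measure_pmf.expectation M (\<lambda>x. (L x)\<^sup>2) - 1"
  proof -
    have "(\<lambda>x. (L x - 1)\<^sup>2) = (\<lambda>x. (L x)\<^sup>2 - 2 * L x + 1)" by (auto simp: power2_eq_square algebra_simps)
    then show ?thesis using EL by (simp add: int prob_space_measure_pmf prob_space.prob_space)
  qed
  finally show ?thesis .
qed

fun lr :: "(nat \<Rightarrow> action \<Rightarrow> nat \<Rightarrow> real) \<Rightarrow> (nat \<times> action) list \<Rightarrow> nat \<Rightarrow> real" where
  "lr r [] s = 1"
| "lr r ((s0, a) # rh) s = r s0 a s * lr r rh s0"

definition LR :: "(nat \<Rightarrow> action \<Rightarrow> nat \<Rightarrow> real) \<Rightarrow> hist \<times> nat \<Rightarrow> real" where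
  "LR r x = lr r (rev (fst x)) (snd x)"

lemma LR_snoc: "LR r (h @ [(s0, a)], s) = r s0 a s * LR r (h, s0)"
  by (simp add: LR_def)

lemma change_measure:
  fixes f :: "hist \<times> nat \<Rightarrow> real"
  assumes fA: "\<And>h s. finite (set_pmf (A h s))" and fP: "\<And>s a. finite (set_pmf (P s a))"
    and fP': "\<And>s a. finite (set_pmf (P' s a))"
    and cm: "\<And>s a (\<phi> :: nat \<Rightarrow> real). measure_pmf.expectation (P' s a) \<phi> =
               measure_pmf.expectation (P s a) (\<lambda>s'. \<phi> s' * r s a s')"
  shows "measure_pmf.expectation (traj P' A n) f = measure_pmf.expectation (traj P A n) (\<lambda>x. f x * LR r x)"
proof (induction n arbitrary: f)
  case 0
  then show ?case by (simp add: LR_def)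
next
  case (Suc n)
  have "measure_pmf.expectation (traj P' A (Suc n)) f =
    measure_pmf.expectation (traj P' A n) (\<lambda>(h,s). measure_pmf.expectation (A h s)
       (\<lambda>a. measure_pmf.expectation (P' s a) (\<lambda>s'. f (h @ [(s,a)], s'))))"
    by (rule exp_traj_Suc[OF fA fP'])
  also have "\<dots> = measure_pmf.expectation (traj P A n) (\<lambda>x. (case x of (h,s) \<Rightarrow> measure_pmf.expectation (A h s)
       (\<lambda>a. measure_pmf.expectation (P' s a) (\<lambda>s'. f (h @ [(s,a)], s')))) * LR r x)"
    by (rule Suc)
  also have "\<dots> = measure_pmf.expectation (traj P A n) (\<lambda>(h,s). measure_pmf.expectation (A h s)
       (\<lambda>a. measure_pmf.expectation (P s a) (\<lambda>s'. f (h @ [(s,a)], s') * LR r (h @ [(s,a)], s'))))"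
  proof (intro Bochner_Integration.integral_cong refl)
    fix x :: "hist \<times> nat"
    obtain h s where x: "x = (h, s)" by (cases x)
    have "measure_pmf.expectation (A h s) (\<lambda>a. measure_pmf.expectation (P' s a) (\<lambda>s'. f (h @ [(s,a)], s'))) * LR r (h, s)
      = measure_pmf.expectation (A h s) (\<lambda>a. measure_pmf.expectation (P' s a) (\<lambda>s'. f (h @ [(s,a)], s')) * LR r (h, s))"
      by simp
    also have "\<dots> = measure_pmf.expectation (A h s) (\<lambda>a. measure_pmf.expectation (P s a) (\<lambda>s'. f (h @ [(s,a)], s') * LR r (h @ [(s,a)], s')))"
      by (intro Bochner_Integration.integral_cong refl) (subst cm, subst integral_mult_left_zero[symmetric], simp add: LR_snoc mult_ac)
    finally show "(case x of (h,s) \<Rightarrow> measure_pmf.expectation (A h s)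
       (\<lambda>a. measure_pmf.expectation (P' s a) (\<lambda>s'. f (h @ [(s,a)], s')))) * LR r x =
       (case x of (h,s) \<Rightarrow> measure_pmf.expectation (A h s)
       (\<lambda>a. measure_pmf.expectation (P s a) (\<lambda>s'. f (h @ [(s,a)], s') * LR r (h @ [(s,a)], s'))))"
      using x by simp
  qed
  also have "\<dots> = measure_pmf.expectation (traj P A (Suc n)) (\<lambda>x. f x * LR r x)"
    by (rule exp_traj_Suc[symmetric, OF fA fP])
  finally show ?case .
qed

lemma chi_bound:
  fixes P :: "nat \<Rightarrow> action \<Rightarrow> nat pmf" and A :: algorithm and C :: real and n :: nat
    and r :: "nat \<Rightarrow> action \<Rightarrow> nat \<Rightarrow> real"
  assumes fA: "\<And>h s. finite (set_pmf (A h s))" and fP: "\<And>s a. finite (set_pmf (P s a))"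
    and vA: "valid_alg d A" and sP: "\<And>s a. set_pmf (P s a) \<subseteq> {0,1}"
    and C: "\<And>s a. s \<in> {0,1} \<Longrightarrow> a \<in> actions d \<Longrightarrow>
              measure_pmf.expectation (P s a) (\<lambda>s'. (r s a s')\<^sup>2) \<le> C"
  shows "measure_pmf.expectation (traj P A n) (\<lambda>x. (LR r x)\<^sup>2) \<le> C ^ n"
proof (induction n)
  case 0
  then show ?case by (simp add: LR_def)
next
  case (Suc n)
  have fT: "finite (set_pmf (traj P A n))" by (rule traj_fin[OF fA fP])
  have "measure_pmf.expectation (traj P A (Suc n)) (\<lambda>x. (LR r x)\<^sup>2) =
    measure_pmf.expectation (traj P A n) (\<lambda>(h,s). measure_pmf.expectation (A h s)
       (\<lambda>a. measure_pmf.expectation (P s a) (\<lambda>s'. (LR r (h @ [(s,a)], s'))\<^sup>2)))"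
    by (rule exp_traj_Suc[OF fA fP])
  also have "\<dots> \<le> measure_pmf.expectation (traj P A n) (\<lambda>x. C * (LR r x)\<^sup>2)"
  proof (rule exp_mono[OF fT])
    fix x assume x: "x \<in> set_pmf (traj P A n)"
    obtain h s where xe: "x = (h, s)" by (cases x)
    have sup: "s \<in> {0,1}" using traj_support[OF vA sP x[unfolded xe]] by auto
    have "measure_pmf.expectation (A h s) (\<lambda>a. measure_pmf.expectation (P s a) (\<lambda>s'. (LR r (h @ [(s,a)], s'))\<^sup>2))
       = measure_pmf.expectation (A h s) (\<lambda>a. measure_pmf.expectation (P s a) (\<lambda>s'. (r s a s')\<^sup>2) * (LR r (h, s))\<^sup>2)"
      by (intro Bochner_Integration.integral_cong refl) (simp add: LR_snoc power_mult_distrib)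
    also have "\<dots> \<le> measure_pmf.expectation (A h s) (\<lambda>a. C * (LR r (h, s))\<^sup>2)"
    proof (rule exp_mono[OF fA])
      fix a assume "a \<in> set_pmf (A h s)"
      then have "a \<in> actions d" using vA unfolding valid_alg_def by blast
      then show "measure_pmf.expectation (P s a) (\<lambda>s'. (r s a s')\<^sup>2) * (LR r (h, s))\<^sup>2 \<le> C * (LR r (h, s))\<^sup>2"
        using C[OF sup] by (intro mult_right_mono) auto
    qed
    also have "\<dots> = C * (LR r (h, s))\<^sup>2" by simp
    finally show "(case x of (h,s) \<Rightarrow> measure_pmf.expectation (A h s)
       (\<lambda>a. measure_pmf.expectation (P s a) (\<lambda>s'. (LR r (h @ [(s,a)], s'))\<^sup>2))) \<le> C * (LR r x)\<^sup>2"
      using xe by simp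
  qed
  also have "\<dots> = C * measure_pmf.expectation (traj P A n) (\<lambda>x. (LR r x)\<^sup>2)" by simp
  also have "\<dots> \<le> C * C ^ n"
  proof (rule mult_left_mono[OF Suc])
    obtain a where "a \<in> actions d"
      using vA set_pmf_not_empty[of "A [] 0"] unfolding valid_alg_def by blast
    have "0 \<le> measure_pmf.expectation (P 0 a) (\<lambda>s'. (r 0 a s')\<^sup>2)"
      by (rule Bochner_Integration.integral_nonneg) auto
    moreover have "measure_pmf.expectation (P 0 a) (\<lambda>s'. (r 0 a s')\<^sup>2) \<le> C"
      using C[OF _ \<open>a \<in> actions d\<close>, of 0] by simp
    ultimately show "0 \<le> C" by linarith
  qed
  finally show ?case by simp
qed

locale setting =
  fixes d :: nat and D :: real and T :: nat
  assumes d2: "d \<ge> 2" and D101: "D \<ge> 101" and TD: "real T \<ge> 45 * real (d - 1) ^ 2 * D"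
begin

definition n1 :: real where "n1 = real (d - 1)"
definition u :: real where "u = D * Delta d D T"
definition b :: real where "b = Deltabar d D T"
definition c :: real where "c = D - 1"
definition ct :: real where "ct = b / n1"

lemma n1_ge1: "n1 \<ge> 1" using d2 unfolding n1_def by simp
lemma d_n1: "real d = n1 + 1" using d2 unfolding n1_def by simp
lemma T_pos: "real T > 0"
proof -
  have "45 * n1 ^ 2 * D > 0" using n1_ge1 D101 by simp
  then show ?thesis using TD unfolding n1_def by linarith
qed
lemma c_pos: "c \<ge> 100" unfolding c_def using D101 by simp
lemma delta_eq: "delta D = 1 / D" by (simp add: delta_def)

lemma ln2_ge: "ln 2 \<ge> (1/2::real)"
proof -
  have "exp (1/2::real) ^ 2 = exp 1" by (simp flip: exp_of_nat_mult)
  also have "\<dots> \<le> 3" by (rule exp_le)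
  finally have "exp (1/2::real) ^ 2 < 2 ^ 2" by simp
  then have "exp (1/2::real) < 2" using power_less_imp_less_base by fastforce
  then show ?thesis by (subst ln_ge_iff) auto
qed

lemma Delta_eq: "Delta d D T = n1 / (45 * sqrt (2/5 * (real T * D) * ln 2))"
proof -
  have "real T / delta D = real T * D" by (simp add: delta_def)
  then show ?thesis unfolding Delta_def n1_def by simp
qed

lemma sq_pos: "sqrt (2/5 * (real T * D) * ln 2) > 0" using T_pos D101 by simp

lemma u_rel: "u * 45 * sqrt (2/5 * (real T * D) * ln 2) = D * n1"
  unfolding u_def Delta_eq using sq_pos T_pos by (simp add: field_simps)

lemma u_pos: "u > 0"
  unfolding u_def Delta_eq using sq_pos n1_ge1 D101 by (intro mult_pos_pos divide_pos_pos) auto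

lemma u_sq: "u ^ 2 * 810 * real T * ln 2 = D * n1 ^ 2"
proof -
  define S where "S = sqrt (2/5 * (real T * D) * ln 2)"
  have S2: "S ^ 2 = 2/5 * (real T * D) * ln 2"
    unfolding S_def using T_pos D101 by (intro real_sqrt_pow2) simp
  have "(u * 45 * S) ^ 2 = (D * n1) ^ 2" using u_rel S_def by simp
  then have "u^2 * 2025 * S^2 = D^2 * n1^2" by (simp add: power_mult_distrib)
  then have "u^2 * 2025 * (2/5 * (real T * D) * ln 2) = D^2 * n1^2" by (simp only: S2)
  then have "D * (u^2 * 810 * real T * ln 2) = D * (D * n1^2)" by (simp add: power2_eq_square algebra_simps)
  then show ?thesis using D101 by simp
qed

lemma u_small: "u \<le> 1/100"
proof -
  have "u ^ 2 * 810 * (45 * n1 ^ 2 * D) * (1/2) \<le> u ^ 2 * 810 * real T * ln 2"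
    using TD ln2_ge unfolding n1_def
    by (intro mult_mono mult_left_mono) auto
  then have "u^2 * 18225 * (D * n1^2) \<le> 1 * (D * n1^2)" using u_sq by (simp add: algebra_simps)
  moreover have "D * n1^2 > 0" using n1_ge1 D101 by simp
  ultimately have "u^2 * 18225 \<le> 1" by (simp only: mult_le_cancel_right_pos)
  show ?thesis
  proof (rule ccontr)
    assume "\<not> u \<le> 1/100"
    then have "(1/100)^2 < u^2" by (intro power_strict_mono) auto
    moreover have "(1/100::real)^2 = 1/10000" by (simp add: power2_eq_square)
    ultimately show False using \<open>u^2 * 18225 \<le> 1\<close> by linarith
  qed
qed

lemma uT_bound: "u * real T \<ge> n1 * sqrt (real T * D) / 29"
proof -
  define s where "s = sqrt (real T * D)"
  have s_pos: "s > 0" unfolding s_def using T_pos D101 by simp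
  have s2: "s * s = real T * D" unfolding s_def using T_pos D101 by simp
  have "2/5 * (real T * D) * ln 2 = (2/5 * ln 2) * (real T * D)" by simp
  then have "sqrt (2/5 * (real T * D) * ln 2) = sqrt (2/5 * ln 2) * s" unfolding s_def
    by (simp only: real_sqrt_mult)
  moreover have "sqrt (2/5 * ln 2) \<le> sqrt (2/5::real)" using ln_2_less_1 by (intro real_sqrt_le_mono) simp
  moreover have "sqrt (2/5::real) \<le> 64/100" by (rule real_sqrt_le_iff'[THEN iffD2]) (auto simp: power2_eq_square)
  ultimately have "sqrt (2/5 * (real T * D) * ln 2) \<le> 64/100 * s" using s_pos by (smt (verit) mult_right_mono)
  then have "D * n1 \<le> u * 45 * (64/100 * s)" using u_rel u_pos by (metis mult_left_mono less_imp_le mult_nonneg_nonneg zero_le_numeral)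
  then have "D * n1 * real T \<le> u * real T * 28.8 * s" using T_pos by (simp add: algebra_simps mult_right_mono)
  then have "n1 * (s * s) \<le> u * real T * 28.8 * s" using s2 by (simp add: algebra_simps)
  then have "n1 * s \<le> u * real T * 28.8" using s_pos by (simp add: algebra_simps)
  moreover have "u * real T > 0" using u_pos T_pos by simp
  ultimately show ?thesis unfolding s_def[symmetric] using n1_ge1 s_pos by simp
qed


lemma Delta_u: "Delta d D T = u / D" unfolding u_def using D101 by simp

lemma arg_eq: "((1 - delta D) * (delta D + Delta d D T)) / (delta D * (1 - delta D - Delta d D T))
   = (1 + u) * c / (c - u)"
proof -
  have cu: "c - u > 0" using c_pos u_small by simp
  have D0: "D > 0" using D101 by simp
  have cu': "D - 1 - u > 0" using cu unfolding c_def by simp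
  have e1: "(1 - delta D) * (delta D + Delta d D T) = ((D - 1) * (1 + u)) / D^2"
    unfolding delta_def Delta_u using D0 by (simp add: field_simps power2_eq_square)
  have e2: "delta D * (1 - delta D - Delta d D T) = (D - 1 - u) / D^2"
    unfolding delta_def Delta_u using D0 by (simp add: field_simps power2_eq_square)
  have gen: "(a / k) / (y / k) = a / y" if "k \<noteq> 0" for a y k :: real using that by simp
  show ?thesis unfolding e1 e2 gen[OF power_not_zero[of D 2]] using D0 by (simp add: c_def mult.commute)
qed

lemma b_eq: "b = ln ((1 + u) * c / (c - u))"
  unfolding b_def Deltabar_def arg_eq ..

lemma arg_pos: "(1 + u) * c / (c - u) > 0"
  using c_pos u_small u_pos by simp

lemma exp_b: "exp b = (1 + u) * c / (c - u)"
  unfolding b_eq using arg_pos by simp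

lemma b_lower: "b \<ge> u / (1 + u)"
proof -
  have cu: "c - u > 0" using c_pos u_small by simp
  have "(1 + u) * c / (c - u) \<ge> 1 + u"
    using cu u_pos c_pos by (simp add: field_simps)
  then have "ln (1 + u) \<le> b" unfolding b_eq using u_pos by (subst ln_le_cancel_iff) auto
  moreover have "ln (1 / (1 + u)) \<le> 1 / (1 + u) - 1" using u_pos by (intro ln_le_minus_one) auto
  then have "ln (1 + u) \<ge> 1 - 1 / (1 + u)" using u_pos by (simp add: ln_div)
  moreover have "1 - 1 / (1 + u) = u / (1 + u)" using u_pos by (simp add: field_simps)
  ultimately show ?thesis by linarith
qed

lemma b_upper: "b \<le> 51/50 * u"
proof -
  have cu: "c - u > 0" using c_pos u_small by simp
  have "b \<le> (1 + u) * c / (c - u) - 1" unfolding b_eq using arg_pos by (rule ln_le_minus_one)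
  also have "\<dots> = u * (c + 1) / (c - u)" using cu by (simp add: field_simps)
  also have "\<dots> \<le> 51/50 * u"
  proof -
    have "u * (c + 1) * 50 \<le> 51 * u * (c - u)"
    proof -
      have "(c + 1) * 50 \<le> 51 * (c - u)" using c_pos u_small by simp
      then show ?thesis using u_pos by (metis mult.assoc mult.left_commute mult_left_mono less_imp_le)
    qed
    then show ?thesis using cu by (simp add: field_simps)
  qed
  finally show ?thesis .
qed

lemma b_pos: "b > 0" using b_lower u_pos by (smt (verit) divide_pos_pos)
lemma b_small: "b \<le> 51/5000" using b_upper u_small by linarith

definition sig :: "real \<Rightarrow> real" where "sig x = 1 / (1 + c * exp (- x))"

lemma sig_b: "sig b = (1 + u) / D"
proof -
  have cu: "c - u > 0" using c_pos u_small by simp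
  have "exp (- b) = (c - u) / ((1 + u) * c)" using exp_b by (simp add: exp_minus)
  then have "c * exp (- b) = (c - u) / (1 + u)" using c_pos by simp
  then have "sig b = 1 / (1 + (c - u) / (1 + u))" unfolding sig_def by simp
  also have "\<dots> = (1 + u) / D" using u_pos unfolding c_def by (simp add: field_simps)
  finally show ?thesis .
qed

lemma sig_pos: "0 < sig x" "sig x < 1"
proof -
  have "c * exp (- x) > 0" using c_pos by simp
  then show "0 < sig x" "sig x < 1" unfolding sig_def by (auto simp: field_simps)
qed

lemma sig_mono: "x \<le> y \<Longrightarrow> sig x \<le> sig y"
proof -
  assume "x \<le> y"
  then have "c * exp (- y) \<le> c * exp (- x)" using c_pos by simp
  moreover have "c * exp (- y) > 0" using c_pos by simp
  ultimately show ?thesis unfolding sig_def by (simp add: frac_le)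
qed

lemma sig_diff: "sig y - sig x = c * (exp (- x) - exp (- y)) / ((1 + c * exp (- y)) * (1 + c * exp (- x)))"
proof -
  have "1 + c * exp (- y) > 0" "1 + c * exp (- x) > 0" using c_pos by (simp_all add: add_pos_pos)
  then show ?thesis unfolding sig_def by (simp add: field_simps)
qed

definition kappa :: real where "kappa = c * exp (- b) / ((1 + c * exp b) * (1 + c * exp (- b)))"

lemma sig_gap:
  assumes "- b \<le> x" "x \<le> b"
  shows "sig b - sig x \<ge> kappa * (b - x)"
proof -
  have e1: "exp (- x) \<ge> exp (- b) * (1 + (b - x))"
  proof -
    have "exp (- b) * (1 + (b - x)) \<le> exp (- b) * exp (b - x)" by (intro mult_left_mono) auto
    also have "\<dots> = exp (- x)" by (simp flip: exp_add)
    finally show ?thesis .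
  qed
  have "c * (exp (- b) * (1 + (b - x))) \<le> c * exp (- x)"
    by (rule mult_left_mono[OF e1]) (use c_pos in simp)
  then have num: "c * (exp (- x) - exp (- b)) \<ge> c * exp (- b) * (b - x)"
    by (simp add: algebra_simps)
  have den: "(1 + c * exp (- b)) * (1 + c * exp (- x)) \<le> (1 + c * exp b) * (1 + c * exp (- b))"
  proof -
    have "exp (- x) \<le> exp b" using assms by simp
    then have "1 + c * exp (- x) \<le> 1 + c * exp b" using c_pos by simp
    moreover have "1 + c * exp (- b) > 0" using c_pos by (simp add: add_pos_pos)
    ultimately show ?thesis by (simp add: mult.commute mult_left_mono)
  qed
  have dpos: "(1 + c * exp (- b)) * (1 + c * exp (- x)) > 0" using c_pos by (simp add: add_pos_pos)
  have npos: "c * exp (- b) * (b - x) \<ge> 0" using c_pos assms by simp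
  have "kappa * (b - x) = c * exp (- b) * (b - x) / ((1 + c * exp b) * (1 + c * exp (- b)))"
    unfolding kappa_def by simp
  also have "\<dots> \<le> c * exp (- b) * (b - x) / ((1 + c * exp (- b)) * (1 + c * exp (- x)))"
    by (rule divide_left_mono[OF den npos]) (use dpos c_pos in \<open>simp add: add_pos_pos\<close>)
  also have "\<dots> \<le> c * (exp (- x) - exp (- b)) / ((1 + c * exp (- b)) * (1 + c * exp (- x)))"
    by (rule divide_right_mono[OF num]) (use dpos in simp)
  also have "\<dots> = sig b - sig x" by (rule sig_diff[symmetric])
  finally show ?thesis .
qed


lemma sig_upper_aux:
  assumes "x \<le> y"
  shows "sig y - sig x \<le> (exp y - exp x) / c"
proof -
  have cp: "c > 0" using c_pos by simp
  have num: "c * (exp (- x) - exp (- y)) \<ge> 0" using assms cp by simp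
  have d1: "(c * exp (- y)) * (c * exp (- x)) > 0" using cp by simp
  have den: "(c * exp (- y)) * (c * exp (- x)) \<le> (1 + c * exp (- y)) * (1 + c * exp (- x))"
    using cp by (intro mult_mono) auto
  have "sig y - sig x \<le> c * (exp (- x) - exp (- y)) / ((c * exp (- y)) * (c * exp (- x)))"
    unfolding sig_diff by (rule divide_left_mono[OF den num]) (use d1 cp in \<open>simp add: add_pos_pos\<close>)
  also have "\<dots> = (exp y - exp x) / c"
    using cp by (simp add: exp_minus field_simps)
  finally show ?thesis .
qed

lemma exp_diff_le: "(x::real) \<le> y \<Longrightarrow> exp y - exp x \<le> exp y * (y - x)"
proof -
  assume "x \<le> y"
  have "exp y * (1 + (x - y)) \<le> exp y * exp (x - y)" by (intro mult_left_mono) auto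
  also have "\<dots> = exp x" by (simp flip: exp_add)
  finally show ?thesis by (simp add: algebra_simps)
qed

lemma sig_lip:
  assumes "x \<le> b" "y \<le> b"
  shows "\<bar>sig y - sig x\<bar> \<le> exp b * \<bar>y - x\<bar> / c"
proof -
  have cp: "c > 0" using c_pos by simp
  have key: "sig q - sig p \<le> exp b * (q - p) / c" if "p \<le> q" "q \<le> b" for p q
  proof -
    have "sig q - sig p \<le> (exp q - exp p) / c" by (rule sig_upper_aux[OF that(1)])
    also have "\<dots> \<le> exp q * (q - p) / c" using exp_diff_le[OF that(1)] cp by (simp add: divide_right_mono)
    also have "\<dots> \<le> exp b * (q - p) / c" using that cp by (intro divide_right_mono mult_right_mono) auto
    finally show ?thesis .
  qed
  show ?thesis
  proof (cases "x \<le> y")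
    case True
    then show ?thesis using key[OF True assms(2)] sig_mono[OF True] by simp
  next
    case False
    then have "y \<le> x" by simp
    then show ?thesis using key[OF \<open>y \<le> x\<close> assms(1)] sig_mono[OF \<open>y \<le> x\<close>] by simp
  qed
qed

lemma sig_low:
  assumes "- b \<le> x"
  shows "sig x \<ge> exp (- b) / D"
proof -
  have cp: "c > 0" using c_pos by simp
  have "sig (- b) \<le> sig x" using assms by (rule sig_mono)
  moreover have "exp (- b) / D \<le> sig (- b)"
  proof -
    have "exp (- b) * (1 + c * exp b) = exp (- b) + c" by (simp add: algebra_simps flip: exp_add)
    also have "\<dots> \<le> D" using b_pos unfolding c_def by simp
    finally have "exp (- b) * (1 + c * exp b) \<le> D" .
    moreover have "1 + c * exp b > 0" using cp by (simp add: add_pos_pos)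
    ultimately show ?thesis unfolding sig_def using D101 by (simp add: field_simps)
  qed
  ultimately show ?thesis by linarith
qed

lemma sig_high:
  assumes "x \<le> b"
  shows "1 - sig x \<ge> 1/2"
proof -
  have "sig x \<le> sig b" using assms by (rule sig_mono)
  also have "\<dots> = (1 + u) / D" by (rule sig_b)
  also have "\<dots> \<le> 1/2" using u_small D101 by (simp add: field_simps)
  finally show ?thesis by simp
qed

definition Xc :: real where "Xc = 8 * exp (3 * b) * ct^2 * D / c^2"

lemma chi_step:
  assumes "- b \<le> x" "x \<le> b" "y \<le> b" "\<bar>y - x\<bar> \<le> 2 * ct"
  shows "(sig y - sig x)^2 / (sig x * (1 - sig x)) \<le> Xc"
proof -
  have cp: "c > 0" using c_pos by simp
  have ct0: "ct \<ge> 0" unfolding ct_def using b_pos n1_ge1 by simp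
  have l: "\<bar>sig y - sig x\<bar> \<le> exp b * (2 * ct) / c"
    using sig_lip[OF assms(2,3)] assms(4) cp by (smt (verit) divide_right_mono exp_gt_zero mult_left_mono)
  have "(sig y - sig x)^2 \<le> (exp b * (2 * ct) / c)^2"
    using l by (metis abs_ge_zero power2_abs power_mono)
  moreover have "sig x * (1 - sig x) \<ge> exp (- b) / D * (1/2)"
    using sig_low[OF assms(1)] sig_high[OF assms(2)] by (intro mult_mono) (auto simp: less_imp_le[OF sig_pos(1)])
  moreover have "exp (- b) / D * (1/2) > 0" using D101 by simp
  ultimately have "(sig y - sig x)^2 / (sig x * (1 - sig x)) \<le> (exp b * (2 * ct) / c)^2 / (exp (- b) / D * (1/2))"
    by (intro frac_le) auto
  also have "\<dots> = Xc" unfolding Xc_def using cp D101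
    by (simp add: field_simps power2_eq_square exp_minus mult_exp_exp flip: exp_add)
  finally show ?thesis .
qed


lemma exp_le_inv: "0 \<le> (x::real) \<Longrightarrow> x < 1 \<Longrightarrow> exp x \<le> 1 / (1 - x)"
proof -
  assume a: "0 \<le> x" "x < 1"
  have "1 + (- x) \<le> exp (- x)" by (rule exp_ge_add_one_self)
  then have "(1 - x) * exp x \<le> exp (- x) * exp x" by (intro mult_right_mono) auto
  also have "\<dots> = 1" by (simp flip: exp_add)
  finally show ?thesis using a by (simp add: field_simps)
qed

lemma TX_bound: "real T * Xc \<le> 1/40"
proof -
  have cp: "c > 0" using c_pos by simp
  have h1: "ct^2 \<le> (51/50)^2 * u^2 / n1^2"
  proof -
    have "b^2 \<le> (51/50 * u)^2" using b_upper b_pos by (intro power_mono) auto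
    then have "b^2 / n1^2 \<le> (51/50 * u)^2 / n1^2" by (rule divide_right_mono) simp
    then show ?thesis unfolding ct_def by (simp add: power_divide power_mult_distrib)
  qed
  have h2: "u^2 * real T \<le> D * n1^2 / 405"
  proof -
    have "u^2 * real T * 405 \<le> u^2 * real T * (810 * ln 2)"
      using ln2_ge T_pos by (intro mult_left_mono) auto
    also have "\<dots> = D * n1^2" using u_sq by (simp add: algebra_simps)
    finally show ?thesis by simp
  qed
  have h3: "ct^2 * real T \<le> (51/50)^2 * D / 405"
  proof -
    have "ct^2 * real T \<le> (51/50)^2 * u^2 / n1^2 * real T" using h1 T_pos by (intro mult_right_mono) auto
    also have "\<dots> = (51/50)^2 / n1^2 * (u^2 * real T)" by simp
    also have "\<dots> \<le> (51/50)^2 / n1^2 * (D * n1^2 / 405)" using h2 by (intro mult_left_mono) auto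
    also have "\<dots> = (51/50)^2 * D / 405" using n1_ge1 by simp
    finally show ?thesis .
  qed
  have h4: "exp (3 * b) \<le> 1032/1000"
  proof -
    have "exp (3 * b) \<le> 1 / (1 - 3 * b)" using b_pos b_small by (intro exp_le_inv) auto
    also have "\<dots> \<le> 1032/1000" using b_small b_pos by (simp add: field_simps)
    finally show ?thesis .
  qed
  have h5: "D^2 / c^2 \<le> (101/100)^2"
  proof -
    have "D / c \<le> 101/100" using c_pos unfolding c_def by (simp add: field_simps)
    then have "(D / c)^2 \<le> (101/100)^2" using D101 cp by (intro power_mono) auto
    then show ?thesis by (simp add: power_divide)
  qed
  have "real T * Xc = 8 * exp (3 * b) * (ct^2 * real T) * (D / c^2)" unfolding Xc_def by simp
  also have "\<dots> \<le> 8 * (1032/1000) * ((51/50)^2 * D / 405) * (D / c^2)"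
    using h3 h4 cp D101 by (intro mult_mono mult_right_mono) auto
  also have "\<dots> = 8 * (1032/1000) * ((51/50)^2 / 405) * (D^2 / c^2)" by (simp add: power2_eq_square)
  also have "\<dots> \<le> 8 * (1032/1000) * ((51/50)^2 / 405) * ((101/100)^2)"
    using h5 by (intro mult_left_mono) auto
  also have "\<dots> \<le> 1/40" by (simp add: power2_eq_square)
  finally show ?thesis .
qed

lemma Xc_nonneg: "Xc \<ge> 0" unfolding Xc_def using c_pos D101 by simp

lemma final_num:
  shows "(D / (2 + u)) * kappa * b * real T * (1 / (2 + u) - sqrt ((1 + Xc) ^ T - 1))
           \<ge> real d * sqrt (D * real T) / 2025"
proof -
  have cp: "c > 0" using c_pos by simp
  have tau: "sqrt ((1 + Xc) ^ T - 1) \<le> 1/6"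
  proof -
    have "(1 + Xc) ^ T \<le> exp Xc ^ T" using Xc_nonneg by (intro power_mono) (auto simp: add.commute)
    also have "\<dots> = exp (real T * Xc)" by (simp add: exp_of_nat_mult)
    also have "\<dots> \<le> 1 / (1 - real T * Xc)" using TX_bound Xc_nonneg by (intro exp_le_inv) auto
    also have "\<dots> \<le> 1 / (1 - 1/40)" using TX_bound by (intro divide_left_mono) auto
    finally have "(1 + Xc) ^ T \<le> 40/39" by simp
    moreover have "(1/6::real)^2 = 1/36" by (simp add: power2_eq_square)
    ultimately have "(1 + Xc) ^ T - 1 \<le> (1/6)^2" by linarith
    then have "sqrt ((1 + Xc) ^ T - 1) \<le> sqrt ((1/6)^2)" by (rule real_sqrt_le_mono)
    then show ?thesis by simp
  qed
  have pi0: "1 / (2 + u) \<ge> 100/201" using u_small u_pos by (simp add: field_simps)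
  have C: "1 / (2 + u) - sqrt ((1 + Xc) ^ T - 1) \<ge> 33/100" using tau pi0 by linarith
  have kap: "kappa \<ge> c * exp (- b) / (D * exp b * D)"
  proof -
    have e1: "1 + c * exp b \<le> D * exp b" using b_pos unfolding c_def by (simp add: algebra_simps)
    have "exp (- b) \<le> 1" using b_pos by simp
    then have "c * exp (- b) \<le> c * 1" using cp by (intro mult_left_mono) auto
    then have e2: "1 + c * exp (- b) \<le> D" unfolding c_def by simp
    have "(1 + c * exp b) * (1 + c * exp (- b)) \<le> D * exp b * D"
      using e1 e2 cp D101 by (intro mult_mono) (auto simp: add_pos_pos less_imp_le)
    moreover have "(1 + c * exp b) * (1 + c * exp (- b)) > 0" using cp by (simp add: add_pos_pos)
    ultimately show ?thesis unfolding kappa_def using cp by (intro divide_left_mono) auto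
  qed
  have A: "D / (2 + u) * kappa \<ge> 12/25"
  proof -
    have "D / (2 + u) * kappa \<ge> D / (2 + u) * (c * exp (- b) / (D * exp b * D))"
      using kap u_pos D101 by (intro mult_left_mono) auto
    moreover have "D / (2 + u) * (c * exp (- b) / (D * exp b * D)) = (c / D) * exp (- 2 * b) / (2 + u)"
    proof -
      have "exp (- 2 * b) * exp b = exp (- b)" by (simp flip: exp_add)
      then have ee: "exp (- 2 * b) = exp (- b) / exp b" by (simp add: field_simps)
      have "2 + u \<noteq> 0" "D \<noteq> 0" using u_pos D101 by auto
      have gen: "(D::real) \<noteq> 0 \<Longrightarrow> k \<noteq> 0 \<Longrightarrow> F \<noteq> 0 \<Longrightarrow>
          D / k * (c * E / (D * F * D)) = (c / D) * (E / F) / k" for k F E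
        by (simp add: divide_inverse inverse_mult_distrib mult_ac)
      show ?thesis unfolding ee using \<open>2 + u \<noteq> 0\<close> \<open>D \<noteq> 0\<close> by (intro gen) auto
    qed
    moreover have "(c / D) * exp (- 2 * b) / (2 + u) \<ge> 12/25"
    proof -
      have "c / D \<ge> 100/101" using D101 unfolding c_def by (simp add: field_simps)
      moreover have "exp (- 2 * b) \<ge> 1 + (- 2 * b)" by (rule exp_ge_add_one_self)
      then have "exp (- 2 * b) \<ge> 9796/10000" using b_small by linarith
      moreover have "c / D \<ge> 0" using cp D101 by simp
      ultimately have "(c / D) * exp (- 2 * b) \<ge> 100/101 * (9796/10000)"
        by (intro mult_mono) auto
      moreover have "2 + u \<le> 201/100" using u_small by simp
      ultimately have "(c / D) * exp (- 2 * b) / (2 + u) \<ge> (100/101 * (9796/10000)) / (201/100)"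
        using u_pos cp D101 by (intro frac_le) auto
      then show ?thesis by simp
    qed
    ultimately show ?thesis by linarith
  qed
  have B: "b \<ge> 100/101 * u"
  proof -
    have "u / (1 + u) \<ge> 100/101 * u" using u_small u_pos by (simp add: field_simps)
    then show ?thesis using b_lower by linarith
  qed
  have "(D / (2 + u)) * kappa * b * real T * (1 / (2 + u) - sqrt ((1 + Xc) ^ T - 1))
      \<ge> (12/25) * (100/101 * u) * real T * (33/100)"
  proof -
    have A0: "(D / (2 + u)) * kappa \<ge> 0" using A by linarith
    have AB: "(D / (2 + u)) * kappa * b \<ge> (12/25) * (100/101 * u)"
      using A B u_pos b_pos A0 by (intro mult_mono) auto
    have ABT: "(D / (2 + u)) * kappa * b * real T \<ge> (12/25) * (100/101 * u) * real T"
      using AB T_pos by (intro mult_right_mono) auto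
    have ABT0: "(D / (2 + u)) * kappa * b * real T \<ge> 0"
    proof -
      have "(12/25) * (100/101 * u) * real T \<ge> 0" using u_pos T_pos by simp
      then show ?thesis using ABT by linarith
    qed
    show ?thesis by (rule mult_mono[OF ABT C ABT0]) simp
  qed
  moreover have "(12/25) * (100/101 * u) * real T * (33/100) \<ge> (12/25) * (100/101) * (33/100) * (n1 * sqrt (real T * D) / 29)"
    using uT_bound by (simp add: mult_ac)
  moreover have "(12/25) * (100/101) * (33/100) * (n1 * sqrt (real T * D) / 29) \<ge> real d * sqrt (D * real T) / 2025"
  proof -
    define S where "S = sqrt (D * real T)"
    have sT: "sqrt (real T * D) = S" unfolding S_def by (simp add: mult.commute)
    have "real d \<le> 2 * n1" using d_n1 n1_ge1 by simp
    moreover have "S \<ge> 0" unfolding S_def using D101 by simp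
    ultimately have h: "real d * S \<le> 2 * n1 * S" by (intro mult_right_mono)
    have h2: "n1 * S \<ge> 0" using n1_ge1 \<open>S \<ge> 0\<close> by simp
    show ?thesis unfolding sT S_def[symmetric] using h h2 by linarith
  qed
  ultimately show ?thesis by linarith
qed

end

lemma ip_append: "length u = length v \<Longrightarrow> ip (u @ [x]) (v @ [y]) = ip u v + x * y"
  by (simp add: ip_def)

lemma ip_replicate0: "ip (replicate n 0) v = 0"
  unfolding ip_def by (induction n arbitrary: v) (auto simp: zip_Cons1 split: list.splits)

lemma ip_scale: "length a = length t \<Longrightarrow> k \<noteq> 0 \<Longrightarrow>
    ip (map (\<lambda>x. - k * x) a) (map (\<lambda>x. x / k) t) = - ip a t"
proof (induction a t rule: list_induct2)
  case Nil
  then show ?case by (simp add: ip_def)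
next
  case (Cons x xs y ys)
  then show ?case by (simp add: ip_def)
qed

lemma ip_map_right: "length a = length t \<Longrightarrow> ip a (map (\<lambda>x. k * x) t) = k * ip a t"
proof (induction a t rule: list_induct2)
  case Nil
  then show ?case by (simp add: ip_def)
next
  case (Cons x xs y ys)
  then show ?case by (simp add: ip_def algebra_simps)
qed

lemma ip_nth: "length u = length v \<Longrightarrow> ip u v = (\<Sum>i<length u. u ! i * v ! i)"
proof (induction u v rule: list_induct2)
  case Nil
  then show ?case by (simp add: ip_def)
next
  case (Cons x xs y ys)
  have "ip (x # xs) (y # ys) = x * y + ip xs ys" by (simp add: ip_def)
  also have "\<dots> = x * y + (\<Sum>i<length xs. xs ! i * ys ! i)" using Cons by simp
  also have "\<dots> = (\<Sum>i<length (x # xs). (x # xs) ! i * (y # ys) ! i)"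
    by (simp only: length_Cons sum.lessThan_Suc_shift) simp
  finally show ?case .
qed

lemma finite_actions: "finite (actions d)"
proof -
  have "actions d = {xs. set xs \<subseteq> {-1, 1} \<and> length xs = d - 1}" unfolding actions_def by auto
  then show ?thesis using finite_lists_length_eq[of "{-1, 1::real}" "d - 1"] by simp
qed

lemma p1_bounds: "0 < p1 d D T th s a" "p1 d D T th s a < 1"
  unfolding p1_def by (auto simp: add_pos_pos)

lemma trans_set: "set_pmf (trans d D T th s a) \<subseteq> {0, 1}"
  unfolding trans_def by auto

lemma trans_fin: "finite (set_pmf (trans d D T th s a))"
  using trans_set by (rule finite_subset) simp

lemma trans_exp: "measure_pmf.expectation (trans d D T th s a) (f :: nat \<Rightarrow> real)
   = p1 d D T th s a * f 1 + (1 - p1 d D T th s a) * f 0"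
  unfolding trans_def using p1_bounds[of d D T th s a]
  by (simp add: integral_bernoulli_pmf algebra_simps)

context setting
begin

lemma alpha_pos: "alpha d D T > 0"
  unfolding alpha_def using b_pos n1_ge1 unfolding b_def n1_def by simp

lemma beta_pos: "beta d D T > 0"
  unfolding beta_def using b_pos unfolding b_def by simp

lemma L_eq: "ln (1 / delta D - 1) = ln c"
  unfolding delta_def c_def by simp

lemma exp_L: "exp (ln c) = c" using c_pos by simp

lemma p1_zero:
  assumes "length th = d - 1" "length a = d - 1"
  shows "p1 d D T th 0 a = sig (ip a th)"
proof -
  have al: "alpha d D T \<noteq> 0" using alpha_pos by simp
  have be: "beta d D T \<noteq> 0" using beta_pos by simp
  have i0: "ip (phi d D T 0 a 0) (thetabar d D T th) = - ip a th + ln c"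
    unfolding phi_def thetabar_def L_eq using assms al be
    by (simp add: ip_append ip_scale)
  have i1: "ip (phi d D T 0 a 1) (thetabar d D T th) = 0"
    unfolding phi_def thetabar_def using assms by (simp add: ip_append ip_replicate0)
  have "p1 d D T th 0 a = 1 / (exp (- ip a th + ln c) + 1)"
    unfolding p1_def i0 i1 by simp
  also have "exp (- ip a th + ln c) = c * exp (- ip a th)"
    using c_pos by (simp only: exp_add) (simp add: mult.commute)
  finally show ?thesis unfolding sig_def by (simp add: add.commute)
qed

lemma p1_one:
  assumes "length th = d - 1"
  shows "p1 d D T th 1 a = 1 - 1 / D"
proof -
  have be: "beta d D T \<noteq> 0" using beta_pos by simp
  have i0: "ip (phi d D T 1 a 0) (thetabar d D T th) = 0"
    unfolding phi_def thetabar_def using assms by (simp add: ip_append ip_replicate0)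
  have i1: "ip (phi d D T 1 a 1) (thetabar d D T th) = ln c"
    unfolding phi_def thetabar_def L_eq using assms be by (simp add: ip_append ip_replicate0)
  have "p1 d D T th 1 a = c / (1 + c)"
    unfolding p1_def i0 i1 using c_pos by simp
  also have "\<dots> = 1 - 1 / D" unfolding c_def using D101 by (simp add: field_simps)
  finally show ?thesis .
qed

end

definition flip :: "nat \<Rightarrow> action \<Rightarrow> action" where "flip i s = s[i := - (s ! i)]"
definition wrong :: "action \<Rightarrow> nat \<Rightarrow> action \<Rightarrow> real" where
  "wrong s i a = (if a ! i = s ! i then 0 else 1)"

lemma act_nth: "a \<in> actions d \<Longrightarrow> i < d - 1 \<Longrightarrow> a ! i = 1 \<or> a ! i = -1"
proof -
  assume a: "a \<in> actions d" "i < d - 1"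
  then have "a ! i \<in> set a" unfolding actions_def by (intro nth_mem) auto
  then have "a ! i \<in> {-1, 1}" using a unfolding actions_def by blast
  then show ?thesis by auto
qed

lemma flip_in: "s \<in> actions d \<Longrightarrow> i < d - 1 \<Longrightarrow> flip i s \<in> actions d"
proof -
  assume a: "s \<in> actions d" "i < d - 1"
  have "set (flip i s) \<subseteq> insert (- (s ! i)) (set s)" unfolding flip_def by (rule set_update_subset_insert)
  moreover have "- (s ! i) \<in> {-1, 1}" using act_nth[OF a] by auto
  ultimately show ?thesis using a unfolding actions_def flip_def by auto
qed

lemma flip_flip: "i < length s \<Longrightarrow> flip i (flip i s) = s"
  unfolding flip_def by simp

lemma flip_nth: "i < length s \<Longrightarrow> flip i s ! j = (if j = i then - (s ! i) else s ! j)"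
  unfolding flip_def by simp

lemma prod_wrong: "a \<in> actions d \<Longrightarrow> s \<in> actions d \<Longrightarrow> i < d - 1 \<Longrightarrow> a ! i * s ! i = 1 - 2 * wrong s i a"
  using act_nth[of a d i] act_nth[of s d i] unfolding wrong_def by auto

lemma ip_sign: "a \<in> actions d \<Longrightarrow> s \<in> actions d \<Longrightarrow>
    ip a s = real (d - 1) - 2 * (\<Sum>i<d-1. wrong s i a)"
proof -
  assume a: "a \<in> actions d" "s \<in> actions d"
  then have l: "length a = d - 1" "length s = d - 1" unfolding actions_def by auto
  have "ip a s = (\<Sum>i<d-1. a ! i * s ! i)" using ip_nth[of a s] l by simp
  also have "\<dots> = (\<Sum>i<d-1. 1 - 2 * wrong s i a)" using prod_wrong[OF a] by simp
  also have "\<dots> = real (d - 1) - 2 * (\<Sum>i<d-1. wrong s i a)"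
    by (simp add: sum_subtractf sum_distrib_left)
  finally show ?thesis .
qed

lemma wrong_range: "0 \<le> wrong s i a" "wrong s i a \<le> 1" unfolding wrong_def by auto

lemma wrong_sum_range: "0 \<le> (\<Sum>i<n. wrong s i a)" "(\<Sum>i<n. wrong s i a) \<le> real n"
proof -
  show "0 \<le> (\<Sum>i<n. wrong s i a)" by (intro sum_nonneg) (simp add: wrong_range)
  have "(\<Sum>i<n. wrong s i a) \<le> (\<Sum>i<n. 1)" by (intro sum_mono) (simp add: wrong_range)
  then show "(\<Sum>i<n. wrong s i a) \<le> real n" by simp
qed

lemma wrong_flip: "a \<in> actions d \<Longrightarrow> s \<in> actions d \<Longrightarrow> i < d - 1 \<Longrightarrow>
   wrong (flip i s) j a = (if j = i then 1 - wrong s i a else wrong s j a)"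
proof -
  assume a: "a \<in> actions d" "s \<in> actions d" "i < d - 1"
  then have l: "length s = d - 1" unfolding actions_def by auto
  show ?thesis using act_nth[OF a(1) a(3)] act_nth[OF a(2) a(3)] a(3) l
    unfolding wrong_def flip_nth[of i s j, OF a(3)[folded l]] by auto
qed

context setting
begin

definition theta_of :: "action \<Rightarrow> real list" where "theta_of s = map (\<lambda>x. ct * x) s"

lemma ct_n1: "ct * n1 = b" unfolding ct_def using n1_ge1 by simp

lemma theta_in: "s \<in> actions d \<Longrightarrow> theta_of s \<in> Thetas d D T"
proof -
  assume a: "s \<in> actions d"
  have "ct * x \<in> {- Deltabar d D T / real (d - 1), Deltabar d D T / real (d - 1)}" if "x \<in> set s" for x
  proof -
    have "x = 1 \<or> x = -1" using a that unfolding actions_def by auto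
    then show ?thesis unfolding ct_def b_def n1_def by auto
  qed
  then show ?thesis using a unfolding Thetas_def theta_of_def actions_def by auto
qed

lemma len_theta: "s \<in> actions d \<Longrightarrow> length (theta_of s) = d - 1"
  unfolding theta_of_def actions_def by simp

lemma ip_theta: "a \<in> actions d \<Longrightarrow> s \<in> actions d \<Longrightarrow> ip a (theta_of s) = ct * ip a s"
  unfolding theta_of_def by (rule ip_map_right) (simp add: actions_def)

lemma x_eq: "a \<in> actions d \<Longrightarrow> s \<in> actions d \<Longrightarrow>
    b - ct * ip a s = 2 * ct * (\<Sum>i<d-1. wrong s i a)"
proof -
  assume a: "a \<in> actions d" "s \<in> actions d"
  have e: "ip a s = real (d - 1) - 2 * (\<Sum>i<d-1. wrong s i a)" by (rule ip_sign[OF a])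
  have "ct * ip a s = ct * n1 - 2 * ct * (\<Sum>i<d-1. wrong s i a)"
    unfolding e n1_def by (simp add: algebra_simps)
  then show ?thesis using ct_n1 by linarith
qed

lemma ct_pos: "ct > 0" unfolding ct_def using b_pos n1_ge1 by simp

lemma x_range: "a \<in> actions d \<Longrightarrow> s \<in> actions d \<Longrightarrow> - b \<le> ct * ip a s \<and> ct * ip a s \<le> b"
proof -
  assume a: "a \<in> actions d" "s \<in> actions d"
  have w0: "0 \<le> (\<Sum>i<d-1. wrong s i a)" and w1: "(\<Sum>i<d-1. wrong s i a) \<le> n1"
    using wrong_sum_range[where n="d-1" and s=s and a=a] unfolding n1_def by auto
  have "2 * ct * (\<Sum>i<d-1. wrong s i a) \<le> 2 * ct * n1" using w1 ct_pos by simp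
  moreover have "0 \<le> 2 * ct * (\<Sum>i<d-1. wrong s i a)" using w0 ct_pos by simp
  ultimately show ?thesis using x_eq[OF a] ct_n1 by linarith
qed

lemma p1_sig0: "a \<in> actions d \<Longrightarrow> s \<in> actions d \<Longrightarrow> p1 d D T (theta_of s) 0 a = sig (ct * ip a s)"
  using p1_zero[of "theta_of s" a] len_theta[of s] ip_theta[of a s] by (simp add: actions_def)

lemma p1_sig1: "s \<in> actions d \<Longrightarrow> p1 d D T (theta_of s) 1 a = 1 - 1 / D"
  using p1_one len_theta by simp

lemma ip_flip_diff: "a \<in> actions d \<Longrightarrow> s \<in> actions d \<Longrightarrow> i < d - 1 \<Longrightarrow>
   \<bar>ct * ip a (flip i s) - ct * ip a s\<bar> = 2 * ct"
proof -
  assume a: "a \<in> actions d" "s \<in> actions d" "i < d - 1"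
  have fi: "flip i s \<in> actions d" using flip_in a by simp
  have "(\<Sum>j<d-1. wrong (flip i s) j a) = (\<Sum>j<d-1. wrong s j a) + (1 - 2 * wrong s i a)"
  proof -
    have "(\<Sum>j<d-1. wrong (flip i s) j a) = (\<Sum>j<d-1. wrong s j a + (if j = i then 1 - 2 * wrong s i a else 0))"
      using wrong_flip[OF a] by (intro sum.cong) auto
    also have "\<dots> = (\<Sum>j<d-1. wrong s j a) + (1 - 2 * wrong s i a)"
      using a(3) by (simp add: sum.distrib)
    finally show ?thesis .
  qed
  then have WW: "ct * (\<Sum>j<d-1. wrong (flip i s) j a) = ct * (\<Sum>j<d-1. wrong s j a) + ct * (1 - 2 * wrong s i a)"
    by (simp only: distrib_left[symmetric])
  have "\<bar>1 - 2 * wrong s i a\<bar> = 1" unfolding wrong_def by auto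
  have "ct * ip a (flip i s) - ct * ip a s = - (2 * ct) * (1 - 2 * wrong s i a)"
    using x_eq[OF a(1) a(2)] x_eq[OF a(1) fi] WW by (simp add: algebra_simps)
  then have "\<bar>ct * ip a (flip i s) - ct * ip a s\<bar> = \<bar>2 * ct\<bar> * \<bar>1 - 2 * wrong s i a\<bar>"
    by (simp add: abs_mult)
  then show ?thesis using \<open>\<bar>1 - 2 * wrong s i a\<bar> = 1\<close> ct_pos by simp
qed

end

definition Ncnt :: "action \<Rightarrow> nat \<Rightarrow> hist \<Rightarrow> real" where
  "Ncnt s i h = sum_list (map (\<lambda>(s0, a). if s0 = 0 \<and> a ! i \<noteq> s ! i then 1 else 0) h)"
definition Mcnt :: "hist \<Rightarrow> real" where
  "Mcnt h = sum_list (map (\<lambda>(s0, a). if s0 = 0 then 1 else 0) h)"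

lemma Ncnt_snoc: "Ncnt s i (h @ [(s0, a)]) = Ncnt s i h + (if s0 = 0 \<and> a ! i \<noteq> s ! i then 1 else 0)"
  by (simp add: Ncnt_def)
lemma Mcnt_snoc: "Mcnt (h @ [(s0, a)]) = Mcnt h + (if s0 = 0 then 1 else 0)"
  by (simp add: Mcnt_def)
lemma tr_snoc: "total_reward (h @ [(s0, a)]) = total_reward h + reward s0 a"
  by (simp add: total_reward_def)
lemma Ncnt_Nil[simp]: "Ncnt s i [] = 0" by (simp add: Ncnt_def)
lemma Mcnt_Nil[simp]: "Mcnt [] = 0" by (simp add: Mcnt_def)
lemma tr_Nil[simp]: "total_reward [] = 0" by (simp add: total_reward_def)

lemma valid_fin: "valid_alg d A \<Longrightarrow> finite (set_pmf (A h s))"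
  using finite_actions[of d] unfolding valid_alg_def by (meson finite_subset)

lemma exp_const_pmf: "measure_pmf.expectation M (\<lambda>x. c :: real) = c"
  by (simp add: prob_space_measure_pmf prob_space.prob_space)

context setting
begin

definition g :: real where "g = D / (2 + u)"
definition J :: real where "J = (1 + u) / (2 + u)"
definition pi0 :: real where "pi0 = 1 / (2 + u)"
definition Kc :: real where "Kc = 2 * g * kappa * ct"

lemma g_pos: "g > 0" unfolding g_def using D101 u_pos by simp
lemma J_eq: "J = g * sig b" unfolding J_def g_def sig_b using D101 by simp
lemma gD0: "g / D = pi0" unfolding g_def pi0_def using D101 by simp
lemma gD: "g * (1 - 1 / D) = g - pi0" using gD0 by (simp add: algebra_simps)
lemma pi0_J: "pi0 + J = 1" unfolding pi0_def J_def using u_pos by (simp add: field_simps)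
lemma kappa_pos: "kappa > 0" unfolding kappa_def using c_pos by (simp add: add_pos_pos)

lemma step_regret:
  assumes s: "s \<in> actions d" and a: "a \<in> actions d" and s0: "s0 \<in> {0, 1}"
  shows "reward s0 a + g * p1 d D T (theta_of s) s0 a
      + Kc * (\<Sum>i<d-1. if s0 = 0 \<and> a ! i \<noteq> s ! i then 1 else 0) \<le> g * real s0 + J"
proof (cases "s0 = 0")
  case True
  have sumw: "(\<Sum>i<d-1. if s0 = 0 \<and> a ! i \<noteq> s ! i then 1 else 0) = (\<Sum>i<d-1. wrong s i a)"
    using True unfolding wrong_def by (intro sum.cong) auto
  define x where "x = ct * ip a s"
  have xr: "- b \<le> x" "x \<le> b" using x_range[OF a s] unfolding x_def by auto
  have "Kc * (\<Sum>i<d-1. wrong s i a) = g * (kappa * (b - x))"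
    unfolding Kc_def x_def x_eq[OF a s] by (simp add: algebra_simps)
  also have "\<dots> \<le> g * (sig b - sig x)" using sig_gap[OF xr] g_pos by (intro mult_left_mono) auto
  finally have "Kc * (\<Sum>i<d-1. wrong s i a) \<le> g * (sig b - sig x)" .
  then show ?thesis using True sumw p1_sig0[OF a s] J_eq unfolding x_def reward_def
    by (simp add: algebra_simps)
next
  case False
  then have "s0 = 1" using s0 by simp
  then show ?thesis using p1_sig1[OF s] gD pi0_J unfolding reward_def
    by simp
qed

lemma regret_sigma:
  assumes s: "s \<in> actions d" and vA: "valid_alg d A"
  shows "expected_total_reward (trans d D T (theta_of s)) A T \<le> real T * J
    - Kc * (\<Sum>i<d-1. measure_pmf.expectation (traj (trans d D T (theta_of s)) A T) (\<lambda>x. Ncnt s i (fst x)))"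
proof -
  define P where "P = trans d D T (theta_of s)"
  have fA: "\<And>h s. finite (set_pmf (A h s))" using valid_fin[OF vA] .
  have fP: "\<And>s a. finite (set_pmf (P s a))" unfolding P_def by (rule trans_fin)
  have sP: "\<And>s a. set_pmf (P s a) \<subseteq> {0, 1}" unfolding P_def by (rule trans_set)
  have fT: "finite (set_pmf (traj P A T))" by (rule traj_fin[OF fA fP])
  define Phi where "Phi x = total_reward (fst x) + g * real (snd x) + Kc * (\<Sum>i<d-1. Ncnt s i (fst x))" for x
  have step: "measure_pmf.expectation (A h s0) (\<lambda>a. measure_pmf.expectation (P s0 a) (\<lambda>s'. - Phi (h @ [(s0, a)], s')))
       \<ge> - Phi (h, s0) + - J" if hs: "(h, s0) \<in> set_pmf (traj P A n)" for n h s0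
  proof -
    have s0: "s0 \<in> {0, 1}" using traj_support[OF vA sP hs] by simp
    have key: "- Phi (h, s0) + - J \<le> measure_pmf.expectation (P s0 a) (\<lambda>s'. - Phi (h @ [(s0, a)], s'))"
      if a: "a \<in> actions d" for a
    proof -
      define ind where "ind = (\<Sum>i<d-1. if s0 = 0 \<and> a ! i \<noteq> s ! i then 1 else (0::real))"
      have PhiS: "Phi (h @ [(s0, a)], s') = Phi (h, 0) + reward s0 a + g * real s' + Kc * ind" for s'
        unfolding Phi_def ind_def by (simp add: tr_snoc Ncnt_snoc sum.distrib algebra_simps)
      have Phi0: "Phi (h, s0) = Phi (h, 0) + g * real s0" unfolding Phi_def by simp
      have "measure_pmf.expectation (P s0 a) (\<lambda>s'. - Phi (h @ [(s0, a)], s'))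
          = - (Phi (h, 0) + reward s0 a + g * p1 d D T (theta_of s) s0 a + Kc * ind)"
        unfolding P_def trans_exp PhiS by (simp add: algebra_simps)
      moreover have "reward s0 a + g * p1 d D T (theta_of s) s0 a + Kc * ind \<le> g * real s0 + J"
        unfolding ind_def by (rule step_regret[OF s a s0])
      ultimately show ?thesis unfolding Phi0 by linarith
    qed
    have "- Phi (h, s0) + - J = measure_pmf.expectation (A h s0) (\<lambda>a. - Phi (h, s0) + - J)"
      by (simp add: exp_const_pmf)
    also have "\<dots> \<le> measure_pmf.expectation (A h s0) (\<lambda>a. measure_pmf.expectation (P s0 a) (\<lambda>s'. - Phi (h @ [(s0, a)], s')))"
      by (rule exp_mono[OF fA]) (use vA key in \<open>auto simp: valid_alg_def\<close>)
    finally show ?thesis .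
  qed
  have dr: "measure_pmf.expectation (traj P A T) (\<lambda>x. - Phi x) \<ge> - Phi ([], 0) + real T * (- J)"
    by (rule drift[OF fA fP]) (rule step)
  have int: "integrable (measure_pmf (traj P A T)) f" for f :: "hist \<times> nat \<Rightarrow> real"
    by (rule integrable_measure_pmf_finite[OF fT])
  have EPhi: "measure_pmf.expectation (traj P A T) Phi =
      measure_pmf.expectation (traj P A T) (\<lambda>x. total_reward (fst x))
      + g * measure_pmf.expectation (traj P A T) (\<lambda>x. real (snd x))
      + Kc * (\<Sum>i<d-1. measure_pmf.expectation (traj P A T) (\<lambda>x. Ncnt s i (fst x)))"
    unfolding Phi_def by (simp add: int integral_sum)
  have Es: "measure_pmf.expectation (traj P A T) (\<lambda>x. real (snd x)) \<ge> 0"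
    by (rule Bochner_Integration.integral_nonneg) simp
  have "Phi ([], 0) = 0" unfolding Phi_def by simp
  then have "measure_pmf.expectation (traj P A T) Phi \<le> real T * J" using dr by simp
  moreover have "expected_total_reward P A T = measure_pmf.expectation (traj P A T) (\<lambda>x. total_reward (fst x))"
    unfolding expected_total_reward_def by (simp add: split_def)
  ultimately show ?thesis using EPhi Es g_pos unfolding P_def[symmetric]
    by (smt (verit) mult_nonneg_nonneg)
qed

end

lemma tr_le_len: "total_reward h \<le> real (length h)"
  unfolding total_reward_def reward_def by (induction h) auto

lemma tr_nonneg: "total_reward h \<ge> 0"
  unfolding total_reward_def reward_def by (induction h) auto

lemma etr_le: assumes vA: "valid_alg d A" and sP: "\<And>s a. set_pmf (P s a) \<subseteq> {0,1}"
  and fP: "\<And>s a. finite (set_pmf (P s a))"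
  shows "expected_total_reward P A n \<le> real n"
proof -
  have fT: "finite (set_pmf (traj P A n))" by (rule traj_fin[OF valid_fin[OF vA] fP])
  have "expected_total_reward P A n = measure_pmf.expectation (traj P A n) (\<lambda>x. total_reward (fst x))"
    unfolding expected_total_reward_def by (simp add: split_def)
  also have "\<dots> \<le> measure_pmf.expectation (traj P A n) (\<lambda>x. real n)"
  proof (rule exp_mono[OF fT])
    fix x assume x: "x \<in> set_pmf (traj P A n)"
    obtain h s where xe: "x = (h, s)" by (cases x)
    have "length h = n" using traj_support[OF vA sP x[unfolded xe]] by simp
    then show "total_reward (fst x) \<le> real n" using tr_le_len[of h] xe by simp
  qed
  also have "\<dots> = real n" by (rule exp_const_pmf)
  finally show ?thesis .
qed

context setting
begin

lemma occupancy:
  assumes s: "s \<in> actions d" and vA: "valid_alg d A"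
  shows "measure_pmf.expectation (traj (trans d D T (theta_of s)) A T) (\<lambda>x. Mcnt (fst x)) \<ge> real T * pi0"
proof -
  define P where "P = trans d D T (theta_of s)"
  have fA: "\<And>h s. finite (set_pmf (A h s))" using valid_fin[OF vA] .
  have fP: "\<And>s a. finite (set_pmf (P s a))" unfolding P_def by (rule trans_fin)
  have sP: "\<And>s a. set_pmf (P s a) \<subseteq> {0, 1}" unfolding P_def by (rule trans_set)
  have fT: "finite (set_pmf (traj P A T))" by (rule traj_fin[OF fA fP])
  define Psi :: "hist \<times> nat \<Rightarrow> real" where "Psi x = Mcnt (fst x) + g * (if snd x = 0 then 1 else 0)" for x
  have step: "measure_pmf.expectation (A h s0) (\<lambda>a. measure_pmf.expectation (P s0 a) (\<lambda>s'. Psi (h @ [(s0, a)], s')))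
       \<ge> Psi (h, s0) + pi0" if hs: "(h, s0) \<in> set_pmf (traj P A n)" for n h s0
  proof -
    have s0: "s0 \<in> {0, 1}" using traj_support[OF vA sP hs] by simp
    have key: "Psi (h, s0) + pi0 \<le> measure_pmf.expectation (P s0 a) (\<lambda>s'. Psi (h @ [(s0, a)], s'))"
      if a: "a \<in> actions d" for a
    proof -
      have E: "measure_pmf.expectation (P s0 a) (\<lambda>s'. Psi (h @ [(s0, a)], s'))
          = Mcnt h + (if s0 = 0 then 1 else 0) + g * (1 - p1 d D T (theta_of s) s0 a)"
        unfolding P_def trans_exp Psi_def by (simp add: Mcnt_snoc algebra_simps)
      show ?thesis
      proof (cases "s0 = 0")
        case True
        have "sig (ct * ip a s) \<le> sig b" using x_range[OF a s] by (intro sig_mono) auto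
        then have "g * sig (ct * ip a s) \<le> J" using J_eq g_pos by (simp add: mult_left_mono)
        then show ?thesis using True E p1_sig0[OF a s] pi0_J unfolding Psi_def by (simp add: algebra_simps)
      next
        case False
        then have "s0 = 1" using s0 by simp
        then show ?thesis using E p1_sig1[OF s] gD0 unfolding Psi_def by simp
      qed
    qed
    have "Psi (h, s0) + pi0 = measure_pmf.expectation (A h s0) (\<lambda>a. Psi (h, s0) + pi0)"
      by (simp add: exp_const_pmf)
    also have "\<dots> \<le> measure_pmf.expectation (A h s0) (\<lambda>a. measure_pmf.expectation (P s0 a) (\<lambda>s'. Psi (h @ [(s0, a)], s')))"
      by (rule exp_mono[OF fA]) (use vA key in \<open>auto simp: valid_alg_def\<close>)
    finally show ?thesis .
  qed
  have dr: "measure_pmf.expectation (traj P A T) Psi \<ge> Psi ([], 0) + real T * pi0"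
    by (rule drift[OF fA fP]) (rule step)
  have int: "integrable (measure_pmf (traj P A T)) f" for f :: "hist \<times> nat \<Rightarrow> real"
    by (rule integrable_measure_pmf_finite[OF fT])
  have EPsi: "measure_pmf.expectation (traj P A T) Psi =
      measure_pmf.expectation (traj P A T) (\<lambda>x. Mcnt (fst x))
      + g * measure_pmf.expectation (traj P A T) (\<lambda>x. if snd x = 0 then 1 else 0)"
    unfolding Psi_def by (simp add: int)
  have "measure_pmf.expectation (traj P A T) (\<lambda>x. if snd x = 0 then 1 else (0::real))
      \<le> measure_pmf.expectation (traj P A T) (\<lambda>x. 1)"
    by (rule exp_mono[OF fT]) auto
  then have Ei: "measure_pmf.expectation (traj P A T) (\<lambda>x. if snd x = 0 then 1 else (0::real)) \<le> 1"
    by (simp add: exp_const_pmf)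
  have "Psi ([], 0) = g" unfolding Psi_def by simp
  moreover have "g * measure_pmf.expectation (traj P A T) (\<lambda>x. if snd x = 0 then 1 else (0::real)) \<le> g * 1"
    using Ei g_pos by (intro mult_left_mono) auto
  ultimately show ?thesis using dr EPsi unfolding P_def[symmetric] by linarith
qed

lemma Jstar_ge:
  assumes s: "s \<in> actions d"
  shows "Jstar d (trans d D T (theta_of s)) \<ge> J"
proof -
  define P where "P = trans d D T (theta_of s)"
  define pol :: algorithm where "pol = (\<lambda>h s0. return_pmf s)"
  have vpol: "valid_alg d pol" unfolding valid_alg_def pol_def using s by simp
  have fA: "\<And>h s. finite (set_pmf (pol h s))" unfolding pol_def by simp
  have fP: "\<And>s a. finite (set_pmf (P s a))" unfolding P_def by (rule trans_fin)
  have sP: "\<And>s a. set_pmf (P s a) \<subseteq> {0, 1}" unfolding P_def by (rule trans_set)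
  define Phi where "Phi x = total_reward (fst x) + g * real (snd x)" for x
  have ips: "ct * ip s s = b" using x_eq[OF s s] unfolding wrong_def by simp
  have lower: "expected_total_reward P pol n \<ge> real n * J - g" for n
  proof -
    have fT: "finite (set_pmf (traj P pol n))" by (rule traj_fin[OF fA fP])
    have step: "measure_pmf.expectation (pol h s0) (\<lambda>a. measure_pmf.expectation (P s0 a) (\<lambda>s'. Phi (h @ [(s0, a)], s')))
       \<ge> Phi (h, s0) + J" if hs: "(h, s0) \<in> set_pmf (traj P pol m)" for m h s0
    proof -
      have s0: "s0 \<in> {0, 1}" using traj_support[OF vpol sP hs] by simp
      have E: "measure_pmf.expectation (pol h s0) (\<lambda>a. measure_pmf.expectation (P s0 a) (\<lambda>s'. Phi (h @ [(s0, a)], s')))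
          = total_reward h + reward s0 s + g * p1 d D T (theta_of s) s0 s"
        unfolding pol_def P_def trans_exp Phi_def by (simp add: tr_snoc algebra_simps)
      show ?thesis
      proof (cases "s0 = 0")
        case True
        then show ?thesis using E p1_sig0[OF s s] ips J_eq unfolding Phi_def reward_def by simp
      next
        case False
        then have "s0 = 1" using s0 by simp
        then show ?thesis using E p1_sig1[OF s] gD pi0_J unfolding Phi_def reward_def by simp
      qed
    qed
    have dr: "measure_pmf.expectation (traj P pol n) Phi \<ge> Phi ([], 0) + real n * J"
      by (rule drift[OF fA fP]) (rule step)
    have int: "integrable (measure_pmf (traj P pol n)) f" for f :: "hist \<times> nat \<Rightarrow> real"
      by (rule integrable_measure_pmf_finite[OF fT])
    have EPhi: "measure_pmf.expectation (traj P pol n) Phi =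
      measure_pmf.expectation (traj P pol n) (\<lambda>x. total_reward (fst x))
      + g * measure_pmf.expectation (traj P pol n) (\<lambda>x. real (snd x))"
      unfolding Phi_def by (simp add: int)
    have "measure_pmf.expectation (traj P pol n) (\<lambda>x. real (snd x)) \<le> measure_pmf.expectation (traj P pol n) (\<lambda>x. 1)"
    proof (rule exp_mono[OF fT])
      fix x assume x: "x \<in> set_pmf (traj P pol n)"
      obtain h s0 where xe: "x = (h, s0)" by (cases x)
      show "real (snd x) \<le> 1" using traj_support[OF vpol sP x[unfolded xe]] xe by auto
    qed
    then have Es: "measure_pmf.expectation (traj P pol n) (\<lambda>x. real (snd x)) \<le> 1" by (simp add: exp_const_pmf)
    have "expected_total_reward P pol n = measure_pmf.expectation (traj P pol n) (\<lambda>x. total_reward (fst x))"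
      unfolding expected_total_reward_def by (simp add: split_def)
    moreover have "Phi ([], 0) = 0" unfolding Phi_def by simp
    moreover have "g * measure_pmf.expectation (traj P pol n) (\<lambda>x. real (snd x)) \<le> g * 1"
      using Es g_pos by (intro mult_left_mono) auto
    ultimately show ?thesis using dr EPhi by linarith
  qed
  have lim: "(\<lambda>n. ereal (J - g / real n)) \<longlonglongrightarrow> ereal J"
  proof -
    have "(\<lambda>n. g / real n) \<longlonglongrightarrow> 0" by (rule lim_const_over_n)
    then have "(\<lambda>n. J - g / real n) \<longlonglongrightarrow> J - 0" by (rule tendsto_diff[OF tendsto_const])
    then have limr: "(\<lambda>n. J - g / real n) \<longlonglongrightarrow> J" by simp
    then show ?thesis by (rule tendsto_ereal)
  qed
  have "ereal J = limsup (\<lambda>n. ereal (J - g / real n))"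
    by (rule lim_imp_Limsup[symmetric]) (simp_all only: lim trivial_limit_sequentially not_False_eq_True)
  also have "\<dots> \<le> limsup (\<lambda>n. ereal (expected_total_reward P pol n / real n))"
  proof (rule Limsup_mono)
    show "\<forall>\<^sub>F n in sequentially. ereal (J - g / real n) \<le> ereal (expected_total_reward P pol n / real n)"
    proof (rule eventually_sequentiallyI[of 1])
      fix n :: nat assume n: "1 \<le> n"
      have "real n * J - g \<le> expected_total_reward P pol n" by (rule lower)
      then have "(real n * J - g) / real n \<le> expected_total_reward P pol n / real n"
        using n by (intro divide_right_mono) auto
      moreover have "(real n * J - g) / real n = J - g / real n" using n by (simp add: field_simps)
      ultimately show "ereal (J - g / real n) \<le> ereal (expected_total_reward P pol n / real n)" by simp
    qed
  qed
  also have "\<dots> \<le> (SUP \<pi>\<in>{\<pi>. valid_alg d \<pi>}. limsup (\<lambda>n. ereal (expected_total_reward P \<pi> n / real n)))"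
    using vpol by (intro SUP_upper) auto
  finally have low: "ereal J \<le> (SUP \<pi>\<in>{\<pi>. valid_alg d \<pi>}. limsup (\<lambda>n. ereal (expected_total_reward P \<pi> n / real n)))" .
  have up: "(SUP \<pi>\<in>{\<pi>. valid_alg d \<pi>}. limsup (\<lambda>n. ereal (expected_total_reward P \<pi> n / real n))) \<le> 1"
  proof (rule SUP_least)
    fix \<pi> assume "\<pi> \<in> {\<pi>. valid_alg d \<pi>}"
    then have v: "valid_alg d \<pi>" by simp
    show "limsup (\<lambda>n. ereal (expected_total_reward P \<pi> n / real n)) \<le> 1"
    proof (rule Limsup_bounded, rule always_eventually, rule allI)
      fix n
      have "expected_total_reward P \<pi> n \<le> real n" by (rule etr_le[OF v sP fP])
      then have "expected_total_reward P \<pi> n / real n \<le> 1"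
        by (cases "n = 0") (auto simp: divide_le_eq_1)
      then show "ereal (expected_total_reward P \<pi> n / real n) \<le> 1" by simp
    qed
  qed
  have "J \<le> real_of_ereal (SUP \<pi>\<in>{\<pi>. valid_alg d \<pi>}. limsup (\<lambda>n. ereal (expected_total_reward P \<pi> n / real n)))"
    using low up by (cases "(SUP \<pi>\<in>{\<pi>. valid_alg d \<pi>}. limsup (\<lambda>n. ereal (expected_total_reward P \<pi> n / real n)))") auto
  then show ?thesis unfolding Jstar_def P_def .
qed

end

lemma Ncnt_range: "0 \<le> Ncnt s i h" "Ncnt s i h \<le> real (length h)"
  unfolding Ncnt_def by (induction h) auto

lemma bern_chi: "0 < (q::real) \<Longrightarrow> q < 1 \<Longrightarrow> q * (q'/q)^2 + (1-q) * ((1-q')/(1-q))^2 = 1 + (q'-q)^2/(q*(1-q))"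
proof -
  assume a: "0 < q" "q < 1"
  have h: "q \<noteq> 0" "1 - q \<noteq> 0" using a by auto
  have "q * (q'/q)^2 + (1-q) * ((1-q')/(1-q))^2 = q'^2/q + (1-q')^2/(1-q)"
    using h by (simp add: power2_eq_square)
  also have "\<dots> = (q'^2 * (1-q) + (1-q')^2 * q) / (q*(1-q))"
    using h by (simp add: field_simps)
  also have "q'^2 * (1-q) + (1-q')^2 * q = q*(1-q) + (q'-q)^2"
    by (simp add: power2_eq_square algebra_simps)
  also have "(q*(1-q) + (q'-q)^2) / (q*(1-q)) = 1 + (q'-q)^2/(q*(1-q))"
    using h by (simp add: add_divide_distrib)
  finally show ?thesis .
qed

context setting
begin

definition tau :: real where "tau = sqrt ((1 + Xc) ^ T - 1)"

lemma tv_pair: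
  assumes s: "s \<in> actions d" and i: "i < d - 1" and vA: "valid_alg d A"
  shows "\<bar>measure_pmf.expectation (traj (trans d D T (theta_of (flip i s))) A T) (\<lambda>x. Ncnt s i (fst x))
       - measure_pmf.expectation (traj (trans d D T (theta_of s)) A T) (\<lambda>x. Ncnt s i (fst x))\<bar> \<le> real T * tau"
proof -
  define s' where "s' = flip i s"
  have s'a: "s' \<in> actions d" unfolding s'_def using flip_in[OF s i] .
  define P where "P = trans d D T (theta_of s)"
  define P' where "P' = trans d D T (theta_of s')"
  define p where "p = p1 d D T (theta_of s)"
  define p' where "p' = p1 d D T (theta_of s')"
  define r where "r s0 a s2 = (if s2 = 1 then p' s0 a / p s0 a else (1 - p' s0 a) / (1 - p s0 a))" for s0 a and s2 :: nat
  have fA: "\<And>h s. finite (set_pmf (A h s))" using valid_fin[OF vA] .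
  have fP: "\<And>s a. finite (set_pmf (P s a))" unfolding P_def by (rule trans_fin)
  have fP': "\<And>s a. finite (set_pmf (P' s a))" unfolding P'_def by (rule trans_fin)
  have sP: "\<And>s a. set_pmf (P s a) \<subseteq> {0, 1}" unfolding P_def by (rule trans_set)
  have fT: "finite (set_pmf (traj P A T))" by (rule traj_fin[OF fA fP])
  have pb: "0 < p s0 a" "p s0 a < 1" for s0 a unfolding p_def using p1_bounds by auto
  have pb': "0 < p' s0 a" "p' s0 a < 1" for s0 a unfolding p'_def using p1_bounds by auto
  have cm: "measure_pmf.expectation (P' s0 a) \<phi> = measure_pmf.expectation (P s0 a) (\<lambda>s2. \<phi> s2 * r s0 a s2)"
    for s0 a and \<phi> :: "nat \<Rightarrow> real"
  proof -
    have "p s0 a \<noteq> 0" "1 - p s0 a \<noteq> 0" using pb[of s0 a] by auto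
    then show ?thesis unfolding P_def P'_def trans_exp r_def p_def[symmetric] p'_def[symmetric]
      by (simp add: field_simps)
  qed
  have chi: "measure_pmf.expectation (P s0 a) (\<lambda>s2. (r s0 a s2)\<^sup>2) \<le> 1 + Xc"
    if s0: "s0 \<in> {0, 1}" and a: "a \<in> actions d" for s0 a
  proof -
    have pp: "p s0 a \<noteq> 0" "1 - p s0 a \<noteq> 0" using pb[of s0 a] by auto
    have E: "measure_pmf.expectation (P s0 a) (\<lambda>s2. (r s0 a s2)\<^sup>2)
        = 1 + (p' s0 a - p s0 a)^2 / (p s0 a * (1 - p s0 a))"
      unfolding P_def trans_exp r_def p_def[symmetric]
      by (subst bern_chi[OF pb, symmetric]) simp
    show ?thesis
    proof (cases "s0 = 0")
      case True
      define x where "x = ct * ip a s"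
      define y where "y = ct * ip a s'"
      have xr: "- b \<le> x" "x \<le> b" using x_range[OF a s] unfolding x_def by auto
      have yr: "y \<le> b" using x_range[OF a s'a] unfolding y_def by auto
      have dxy: "\<bar>y - x\<bar> \<le> 2 * ct" using ip_flip_diff[OF a s i] unfolding x_def y_def s'_def by simp
      have "p s0 a = sig x" "p' s0 a = sig y"
        unfolding p_def p'_def x_def y_def using True p1_sig0[OF a s] p1_sig0[OF a s'a] by auto
      then show ?thesis unfolding E using chi_step[OF xr yr dxy] by simp
    next
      case False
      then have "s0 = 1" using s0 by simp
      then have "p s0 a = p' s0 a" unfolding p_def p'_def using p1_sig1[OF s] p1_sig1[OF s'a] by simp
      then show ?thesis unfolding E using Xc_nonneg by simp
    qed
  qed
  have chiT: "measure_pmf.expectation (traj P A T) (\<lambda>x. (LR r x)\<^sup>2) \<le> (1 + Xc) ^ T"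
    by (rule chi_bound[OF fA fP vA sP chi])
  have EL: "measure_pmf.expectation (traj P A T) (LR r) = 1"
    using change_measure[OF fA fP fP' cm, where n=T and f="\<lambda>x. 1"] by (simp add: exp_const_pmf)
  have cmN: "measure_pmf.expectation (traj P' A T) (\<lambda>x. Ncnt s i (fst x))
      = measure_pmf.expectation (traj P A T) (\<lambda>x. Ncnt s i (fst x) * LR r x)"
    by (rule change_measure[OF fA fP fP' cm])
  have bnd: "\<bar>Ncnt s i (fst x)\<bar> \<le> real T" if x: "x \<in> set_pmf (traj P A T)" for x
  proof -
    obtain h s0 where xe: "x = (h, s0)" by (cases x)
    have "length h = T" using traj_support[OF vA sP x[unfolded xe]] by simp
    then show ?thesis using Ncnt_range[of s i h] xe by simp
  qed
  have "\<bar>measure_pmf.expectation (traj P A T) (\<lambda>x. Ncnt s i (fst x) * LR r x)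
       - measure_pmf.expectation (traj P A T) (\<lambda>x. Ncnt s i (fst x))\<bar>
      \<le> real T * sqrt (measure_pmf.expectation (traj P A T) (\<lambda>x. (LR r x)\<^sup>2) - 1)"
    by (rule tv_bound[OF fT EL bnd])
  also have "\<dots> \<le> real T * tau" unfolding tau_def using chiT
    by (intro mult_left_mono real_sqrt_le_mono) auto
  finally show ?thesis using cmN unfolding P_def P'_def s'_def by simp
qed

lemma pair_bound:
  assumes s: "s \<in> actions d" and i: "i < d - 1" and vA: "valid_alg d A"
  shows "measure_pmf.expectation (traj (trans d D T (theta_of s)) A T) (\<lambda>x. Ncnt s i (fst x))
       + measure_pmf.expectation (traj (trans d D T (theta_of (flip i s))) A T) (\<lambda>x. Ncnt (flip i s) i (fst x))
       \<ge> real T * pi0 - real T * tau"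
proof -
  define s' where "s' = flip i s"
  have s'a: "s' \<in> actions d" unfolding s'_def using flip_in[OF s i] .
  define P' where "P' = trans d D T (theta_of s')"
  have fA: "\<And>h s. finite (set_pmf (A h s))" using valid_fin[OF vA] .
  have fP': "\<And>s a. finite (set_pmf (P' s a))" unfolding P'_def by (rule trans_fin)
  have sP': "\<And>s a. set_pmf (P' s a) \<subseteq> {0, 1}" unfolding P'_def by (rule trans_set)
  have fT: "finite (set_pmf (traj P' A T))" by (rule traj_fin[OF fA fP'])
  have ls: "length s = d - 1" using s unfolding actions_def by simp
  have pt: "Ncnt s' i h = Mcnt h - Ncnt s i h" if hv: "\<forall>x\<in>set h. snd x \<in> actions d" for h
    using hv
  proof (induction h)
    case Nil
    then show ?case by simp
  next
    case (Cons x h)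
    obtain s0 a where xe: "x = (s0, a)" by (cases x)
    have a: "a \<in> actions d" using Cons.prems xe by simp
    have "(if s0 = 0 \<and> a ! i \<noteq> s' ! i then 1 else 0) = (if s0 = 0 then 1 else 0) - (if s0 = 0 \<and> a ! i \<noteq> s ! i then 1 else (0::real))"
      using act_nth[OF a i] act_nth[OF s i] flip_nth[of i s i] i ls unfolding s'_def by auto
    then show ?case using Cons unfolding Ncnt_def Mcnt_def xe by simp
  qed
  have "measure_pmf.expectation (traj P' A T) (\<lambda>x. Ncnt s' i (fst x))
      = measure_pmf.expectation (traj P' A T) (\<lambda>x. Mcnt (fst x) - Ncnt s i (fst x))"
  proof (rule integral_cong_AE)
    show "AE x in measure_pmf (traj P' A T). Ncnt s' i (fst x) = Mcnt (fst x) - Ncnt s i (fst x)"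
    proof (rule AE_pmfI)
      fix x assume x: "x \<in> set_pmf (traj P' A T)"
      obtain h s0 where xe: "x = (h, s0)" by (cases x)
      have "\<forall>y\<in>set h. snd y \<in> actions d" using traj_support[OF vA sP' x[unfolded xe]] by simp
      then show "Ncnt s' i (fst x) = Mcnt (fst x) - Ncnt s i (fst x)" using pt xe by simp
    qed
  qed simp_all
  also have "\<dots> = measure_pmf.expectation (traj P' A T) (\<lambda>x. Mcnt (fst x))
      - measure_pmf.expectation (traj P' A T) (\<lambda>x. Ncnt s i (fst x))"
    by (simp add: integrable_measure_pmf_finite[OF fT])
  finally have e1: "measure_pmf.expectation (traj P' A T) (\<lambda>x. Ncnt s' i (fst x))
      = measure_pmf.expectation (traj P' A T) (\<lambda>x. Mcnt (fst x))
      - measure_pmf.expectation (traj P' A T) (\<lambda>x. Ncnt s i (fst x))" .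
  have occ: "measure_pmf.expectation (traj P' A T) (\<lambda>x. Mcnt (fst x)) \<ge> real T * pi0"
    unfolding P'_def by (rule occupancy[OF s'a vA])
  have tv: "\<bar>measure_pmf.expectation (traj P' A T) (\<lambda>x. Ncnt s i (fst x))
       - measure_pmf.expectation (traj (trans d D T (theta_of s)) A T) (\<lambda>x. Ncnt s i (fst x))\<bar> \<le> real T * tau"
    unfolding P'_def s'_def by (rule tv_pair[OF s i vA])
  show ?thesis using e1 occ tv unfolding P'_def s'_def by linarith
qed

end

lemma sum_list_const: "(\<And>x. x \<in> set xs \<Longrightarrow> f x = k) \<Longrightarrow> sum_list (map f xs) = real (length xs) * (k::real)"
  by (induction xs) (auto simp: algebra_simps)

lemma vnorm_append: "vnorm (u @ [v]) = sqrt (sum_list (map (\<lambda>x. x ^ 2) u) + v ^ 2)"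
  unfolding vnorm_def by simp

context setting
begin

lemma u_sq_bound: "u^2 * 18225 \<le> 1"
proof -
  have "u ^ 2 * 810 * (45 * n1 ^ 2 * D) * (1/2) \<le> u ^ 2 * 810 * real T * ln 2"
    using TD ln2_ge unfolding n1_def
    by (intro mult_mono mult_left_mono) auto
  then have "u^2 * 18225 * (D * n1^2) \<le> 1 * (D * n1^2)" using u_sq by (simp add: algebra_simps)
  moreover have "D * n1^2 > 0" using n1_ge1 D101 by simp
  ultimately show "u^2 * 18225 \<le> 1" by (simp only: mult_le_cancel_right_pos)
qed

lemma u_small2: "u \<le> 3/400"
proof (rule ccontr)
  assume "\<not> u \<le> 3/400"
  then have "(3/400)^2 < u^2" by (intro power_strict_mono) auto
  moreover have "(3/400::real)^2 = 9/160000" by (simp add: power2_eq_square)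
  ultimately show False using u_sq_bound by linarith
qed

lemma alpha_sq: "(alpha d D T)^2 = b / (n1 * (1 + b))"
  unfolding alpha_def b_def[symmetric] n1_def[symmetric] using b_pos n1_ge1
  by (intro real_sqrt_pow2) simp

lemma beta_sq: "(beta d D T)^2 = 1 / (1 + b)"
  unfolding beta_def b_def[symmetric] using b_pos by (intro real_sqrt_pow2) simp

lemma Ltheta_bound:
  assumes s: "s \<in> actions d"
  shows "L_theta d D T (theta_of s) \<le> 100 / 99"
proof -
  have al: "alpha d D T > 0" by (rule alpha_pos)
  have be: "beta d D T > 0" by (rule beta_pos)
  have c1: "(x / alpha d D T)^2 = ct^2 / (alpha d D T)^2" if "x \<in> set (theta_of s)" for x
  proof -
    have "x \<in> (\<lambda>x. ct * x) ` set s" using that unfolding theta_of_def by simp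
    then obtain y where y: "y \<in> set s" "x = ct * y" by blast
    have "y = 1 \<or> y = -1" using s y(1) unfolding actions_def by auto
    then have "x^2 = ct^2" using y(2) by (auto simp: power2_eq_square)
    then show ?thesis by (simp add: power_divide)
  qed
  have "sum_list (map (\<lambda>x. x^2) (map (\<lambda>x. x / alpha d D T) (theta_of s)))
      = sum_list (map (\<lambda>x. (x / alpha d D T)^2) (theta_of s))" by (simp add: comp_def)
  also have "\<dots> = n1 * (ct^2 / (alpha d D T)^2)"
    using sum_list_const[of "theta_of s" "\<lambda>x. (x / alpha d D T)^2" "ct^2 / (alpha d D T)^2", OF c1] len_theta[OF s]
    unfolding n1_def by simp
  also have "\<dots> = b * (1 + b)"
    unfolding alpha_sq ct_def using b_pos n1_ge1 by (simp add: field_simps power2_eq_square)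
  finally have S1: "sum_list (map (\<lambda>x. x^2) (map (\<lambda>x. x / alpha d D T) (theta_of s))) = b * (1 + b)" .
  have S2: "(1 / beta d D T)^2 = 1 + b" using beta_sq b_pos by (simp add: power_divide)
  have "L_theta d D T (theta_of s) = sqrt (b * (1 + b) + (1 + b))"
    unfolding L_theta_def thetabar_def vnorm_append S1 S2 ..
  also have "b * (1 + b) + (1 + b) = (1 + b)^2" by (simp add: power2_eq_square algebra_simps)
  also have "sqrt ((1 + b)^2) = 1 + b" using b_pos by simp
  also have "\<dots> \<le> 100 / 99" using b_upper u_small2 by simp
  finally show ?thesis .
qed

lemma Lphi_bound: "L_phi d D T \<le> 1 + ln (D - 1)"
proof -
  define Lc where "Lc = ln c"
  have Lc0: "Lc \<ge> 0" unfolding Lc_def using c_pos by simp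
  have LcD: "ln (D - 1) = Lc" unfolding Lc_def c_def ..
  have set_eq: "{vnorm (phi d D T s a s') | s a s'. s \<in> states \<and> a \<in> actions d \<and> s' \<in> states}
      = (\<lambda>(s, a, s'). vnorm (phi d D T s a s')) ` (states \<times> actions d \<times> states)" by force
  have fin: "finite (states \<times> actions d \<times> states)" unfolding states_def using finite_actions by simp
  have rep: "replicate (d - 1) 1 \<in> actions d" unfolding actions_def by (auto simp: in_set_replicate)
  have ne: "states \<times> actions d \<times> states \<noteq> {}" using rep unfolding states_def by auto
  have bnd: "vnorm (phi d D T s a s') \<le> 1 + Lc" if a: "a \<in> actions d" for s a s'
  proof -
    have sr: "vnorm (replicate n 0 @ [v]) = \<bar>v\<bar>" for n v
    proof -
      have "sum_list (replicate n (0::real)) = 0" by (induction n) auto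
      then show ?thesis unfolding vnorm_append by simp
    qed
    have b0: "\<bar>beta d D T * Lc\<bar> \<le> Lc"
    proof -
      have "beta d D T \<le> 1" unfolding beta_def b_def[symmetric] using b_pos by simp
      then show ?thesis using beta_pos Lc0 by (simp add: abs_mult mult_left_le_one_le)
    qed
    show ?thesis
    proof (cases "s = 0 \<and> s' = 0")
      case True
      have sq: "(- alpha d D T * x)^2 = (alpha d D T)^2" if "x \<in> set a" for x
      proof -
        have "x = 1 \<or> x = -1" using a that unfolding actions_def by auto
        then show ?thesis by (auto simp: power2_eq_square)
      qed
      have la: "length a = d - 1" using a unfolding actions_def by simp
      have "sum_list (map (\<lambda>x. x^2) (map (\<lambda>x. - alpha d D T * x) a)) = n1 * (alpha d D T)^2"
        using sum_list_const[of a "\<lambda>x. (- alpha d D T * x)^2", OF sq] la unfolding n1_def by (simp add: comp_def)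
      also have "\<dots> = b / (1 + b)" unfolding alpha_sq using n1_ge1 b_pos by simp
      finally have e1: "sum_list (map (\<lambda>x. x^2) (map (\<lambda>x. - alpha d D T * x) a)) = b / (1 + b)" .
      have "b / (1 + b) \<le> 1" using b_pos by simp
      moreover have "(beta d D T * Lc)^2 \<le> Lc^2" using b0 by (metis abs_ge_zero power2_abs power_mono)
      ultimately have "b / (1 + b) + (beta d D T * Lc)^2 \<le> (1 + Lc)^2" using Lc0
        by (simp add: power2_eq_square algebra_simps)
      then have "sqrt (b / (1 + b) + (beta d D T * Lc)^2) \<le> sqrt ((1 + Lc)^2)" by (rule real_sqrt_le_mono)
      moreover have "phi d D T s a s' = map (\<lambda>x. - alpha d D T * x) a @ [beta d D T * Lc]"
        using True unfolding phi_def L_eq Lc_def[symmetric] by simp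
      then have "vnorm (phi d D T s a s') = sqrt (b / (1 + b) + (beta d D T * Lc)^2)"
        by (simp only: vnorm_append e1)
      ultimately show ?thesis using Lc0 by simp
    next
      case False
      show ?thesis
      proof (cases "s = 1 \<and> s' = 1")
        case True
        then show ?thesis using False b0 Lc0 unfolding phi_def L_eq Lc_def[symmetric] by (simp add: sr)
      next
        case F2: False
        have "phi d D T s a s' = replicate (d - 1) 0 @ [0]" using False F2 unfolding phi_def by auto
        then show ?thesis using Lc0 by (simp add: sr)
      qed
    qed
  qed
  have "L_phi d D T = Max ((\<lambda>(s, a, s'). vnorm (phi d D T s a s')) ` (states \<times> actions d \<times> states))"
    unfolding L_phi_def set_eq ..
  also have "\<dots> \<le> 1 + Lc"
    using fin ne bnd by (subst Max_le_iff) auto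
  finally show ?thesis unfolding LcD .
qed

end

context setting
begin

lemma exists_sigma:
  assumes vA: "valid_alg d A"
  shows "\<exists>s\<in>actions d. (\<Sum>i<d-1. measure_pmf.expectation (traj (trans d D T (theta_of s)) A T) (\<lambda>x. Ncnt s i (fst x)))
           \<ge> n1 * (real T * pi0 - real T * tau) / 2"
proof (rule ccontr)
  define F where "F s i = measure_pmf.expectation (traj (trans d D T (theta_of s)) A T) (\<lambda>x. Ncnt s i (fst x))" for s i
  define X where "X = real T * pi0 - real T * tau"
  define S where "S = actions d"
  have finS: "finite S" unfolding S_def by (rule finite_actions)
  have rep: "replicate (d - 1) 1 \<in> S" unfolding S_def actions_def by (auto simp: in_set_replicate)
  then have neS: "S \<noteq> {}" by auto
  assume "\<not> ?thesis"
  then have lt: "\<And>s. s \<in> S \<Longrightarrow> (\<Sum>i<d-1. F s i) < n1 * X / 2" unfolding F_def X_def S_def by auto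
  have pairsum: "2 * (\<Sum>s\<in>S. F s i) \<ge> real (card S) * X" if i: "i < d - 1" for i
  proof -
    have ls: "\<And>s. s \<in> S \<Longrightarrow> i < length s" using i unfolding S_def actions_def by auto
    have re: "(\<Sum>s\<in>S. F (flip i s) i) = (\<Sum>s\<in>S. F s i)"
      by (rule sum.reindex_bij_witness[where i="flip i" and j="flip i"])
         (auto simp: flip_flip ls flip_in[OF _ i] S_def)
    have "real (card S) * X = (\<Sum>s\<in>S. X)" by simp
    also have "\<dots> \<le> (\<Sum>s\<in>S. F s i + F (flip i s) i)"
      by (rule sum_mono) (use pair_bound[OF _ i vA] in \<open>auto simp: F_def X_def S_def\<close>)
    also have "\<dots> = 2 * (\<Sum>s\<in>S. F s i)" using re by (simp add: sum.distrib)
    finally show ?thesis .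
  qed
  have "(\<Sum>s\<in>S. \<Sum>i<d-1. F s i) = (\<Sum>i<d-1. \<Sum>s\<in>S. F s i)" by (rule sum.swap)
  also have "\<dots> \<ge> (\<Sum>i<d-1. real (card S) * X / 2)"
    using pairsum by (intro sum_mono) fastforce
  finally have ge: "(\<Sum>s\<in>S. \<Sum>i<d-1. F s i) \<ge> n1 * (real (card S) * X / 2)"
    unfolding n1_def by simp
  have "(\<Sum>s\<in>S. \<Sum>i<d-1. F s i) < (\<Sum>s\<in>S. n1 * X / 2)"
    using finS neS lt by (intro sum_strict_mono) auto
  also have "\<dots> = n1 * (real (card S) * X / 2)" by simp
  finally show False using ge by simp
qed

end

theorem theorem9:
  fixes d T :: nat and D :: real and A :: algorithm
  assumes "d \<ge> 2" and "D \<ge> 101" and "real T \<ge> 45 * real (d - 1) ^ 2 * D"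
    and "valid_alg d A"
  shows "\<exists>\<theta>\<in>Thetas d D T.
           L_theta d D T \<theta> \<le> 100 / 99 \<and>
           L_phi d D T \<le> 1 + ln (D - 1) \<and>
           expected_regret d (trans d D T \<theta>) A T \<ge> real d * sqrt (D * real T) / 2025"
proof -
  interpret setting d D T using assms(1-3) by unfold_locales
  obtain s where s: "s \<in> actions d" and big:
    "(\<Sum>i<d-1. measure_pmf.expectation (traj (trans d D T (theta_of s)) A T) (\<lambda>x. Ncnt s i (fst x)))
           \<ge> n1 * (real T * pi0 - real T * tau) / 2"
    using exists_sigma[OF assms(4)] by blast
  define SF where "SF = (\<Sum>i<d-1. measure_pmf.expectation (traj (trans d D T (theta_of s)) A T) (\<lambda>x. Ncnt s i (fst x)))"
  have reg: "expected_total_reward (trans d D T (theta_of s)) A T \<le> real T * J - Kc * SF"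
    unfolding SF_def by (rule regret_sigma[OF s assms(4)])
  have Js: "real T * Jstar d (trans d D T (theta_of s)) \<ge> real T * J"
    using Jstar_ge[OF s] by (intro mult_left_mono) auto
  have Kc0: "Kc \<ge> 0" unfolding Kc_def using g_pos kappa_pos ct_pos by simp
  have "Kc * SF \<ge> Kc * (n1 * (real T * pi0 - real T * tau) / 2)"
    using big Kc0 unfolding SF_def by (rule mult_left_mono)
  moreover have "Kc * (n1 * (real T * pi0 - real T * tau) / 2)
      = (D / (2 + u)) * kappa * b * real T * (1 / (2 + u) - sqrt ((1 + Xc) ^ T - 1))"
  proof -
    have gen: "2 * G * k * cc * (nn * (TT * P - TT * t) / 2) = G * k * (cc * nn) * TT * (P - t)"
      for G k cc nn TT P t :: real by (simp add: field_simps)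
    show ?thesis unfolding Kc_def gen ct_n1 unfolding g_def pi0_def tau_def ..
  qed
  moreover have "(D / (2 + u)) * kappa * b * real T * (1 / (2 + u) - sqrt ((1 + Xc) ^ T - 1))
      \<ge> real d * sqrt (D * real T) / 2025" by (rule final_num)
  ultimately have "expected_regret d (trans d D T (theta_of s)) A T \<ge> real d * sqrt (D * real T) / 2025"
    using reg Js unfolding expected_regret_def by linarith
  then show ?thesis using theta_in[OF s] Ltheta_bound[OF s] Lphi_bound by blast
qed

end
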